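(* Let $0\le a<1$ and let $E\subset\partial\mathbb{B}_d$ be compact. If $E$ is $\operatorname{Mult}(\mathcal{D}_a)$-totally null, then $\operatorname{cap}(E,\mathcal{D}_a)=0$.
   Context: For $a>0$, $K_a(z,w)=(1-\langle z,w\rangle)^{-a}$, and $K_0(z,w)=\log\frac{e}{1-\langle z,w\rangle}$; $\mathcal{D}_a$ is the reproducing kernel Hilbert space on $\mathbb{B}_d$ with kernel $K_a$. $\operatorname{Mult}(\mathcal{D}_a)$ is its multiplier algebra with multiplier norm; as a WOT-closed subalgebra of $\mathcal{B}(\mathcal{D}_a)$ it is a dual space with a weak-$*$ topology. A complex regular Borel measure $\mu$ on $\partial\mathbb{B}_d$ is $\operatorname{Mult}(\mathcal{D}_a)$-Henkin if $p\mapsto\int p\,d\mu$ on polynomials extends to a weak-$*$ continuous functional on $\operatorname{Mult}(\mathcal{D}_a)$; a Borel $E\subset\partial\mathbb{B}_d$ is $\operatorname{Mult}(\mathcal{D}_a)$-totally null if $|\mu|(E)=0$ for all such $\mu$. The energy of a positive measure $\mu$ is $\mathcal{E}(\mu,\mathcal{D}_a)=\iint|K_a(z,w)|\,d\mu(z)\,d\mu(w)$ and for compact $E$, $\operatorname{cap}(E,\mathcal{D}_a)^{1/2}=\sup\{\mu(E):\mu\ge0\text{ supported on }E,\ \mathcal{E}(\mu,\mathcal{D}_a)\le1\}$. *)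

theory Defs
  imports "HOL-Analysis.Analysis"
begin

definition cinner :: "complex^'n \<Rightarrow> complex^'n \<Rightarrow> complex" where
  "cinner z w = (\<Sum>i\<in>UNIV. z $ i * cnj (w $ i))"

definition kernelD :: "real \<Rightarrow> complex^'n \<Rightarrow> complex^'n \<Rightarrow> complex" where
  "kernelD a z w =
     (if a > 0 then (1 - cinner z w) powr (- complex_of_real a)
      else Ln (exp 1 / (1 - cinner z w)))"

definition kernel_abs :: "real \<Rightarrow> complex^'n \<Rightarrow> complex^'n \<Rightarrow> ennreal" where
  "kernel_abs a z w = (if cinner z w = 1 then \<infinity> else ennreal (cmod (kernelD a z w)))"

text \<open>Functions are extended by 0 outside X.\<close>
definition kfun :: "'x set \<Rightarrow> ('x \<Rightarrow> 'x \<Rightarrow> complex) \<Rightarrow> 'x \<Rightarrow> ('x \<Rightarrow> complex)" where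
  "kfun X K w = (\<lambda>z. if z \<in> X then K z w else 0)"

definition hnorm :: "(('x \<Rightarrow> complex) \<Rightarrow> ('x \<Rightarrow> complex) \<Rightarrow> complex) \<Rightarrow> ('x \<Rightarrow> complex) \<Rightarrow> real" where
  "hnorm ip f = sqrt (Re (ip f f))"

definition rkhs_on :: "'x set \<Rightarrow> ('x \<Rightarrow> 'x \<Rightarrow> complex) \<Rightarrow> ('x \<Rightarrow> complex) set
     \<Rightarrow> (('x \<Rightarrow> complex) \<Rightarrow> ('x \<Rightarrow> complex) \<Rightarrow> complex) \<Rightarrow> bool" where
  "rkhs_on X K H ip \<longleftrightarrow>
     (\<forall>f\<in>H. \<forall>z. z \<notin> X \<longrightarrow> f z = 0) \<and>
     (\<lambda>z. 0) \<in> H \<and> (\<forall>f\<in>H. \<forall>g\<in>H. (\<lambda>z. f z + g z) \<in> H) \<and> (\<forall>c. \<forall>f\<in>H. (\<lambda>z. c * f z) \<in> H) \<and>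
     (\<forall>f\<in>H. \<forall>g\<in>H. \<forall>h\<in>H. ip (\<lambda>z. f z + g z) h = ip f h + ip g h) \<and>
     (\<forall>c. \<forall>f\<in>H. \<forall>g\<in>H. ip (\<lambda>z. c * f z) g = c * ip f g) \<and>
     (\<forall>f\<in>H. \<forall>g\<in>H. ip g f = cnj (ip f g)) \<and>
     (\<forall>f\<in>H. 0 \<le> Re (ip f f) \<and> (ip f f = 0 \<longrightarrow> f = (\<lambda>z. 0))) \<and>
     (\<forall>s. (\<forall>n. s n \<in> H) \<and>
          (\<forall>e>0. \<exists>N. \<forall>m\<ge>N. \<forall>n\<ge>N. hnorm ip (\<lambda>z. s m z - s n z) < e)
          \<longrightarrow> (\<exists>g\<in>H. (\<lambda>n. hnorm ip (\<lambda>z. s n z - g z)) \<longlonglongrightarrow> 0)) \<and>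
     (\<forall>w\<in>X. kfun X K w \<in> H \<and> (\<forall>f\<in>H. ip f (kfun X K w) = f w))"

definition mult :: "'x set \<Rightarrow> ('x \<Rightarrow> complex) set \<Rightarrow> ('x \<Rightarrow> complex) set" where
  "mult X H = {\<phi>. (\<forall>z. z \<notin> X \<longrightarrow> \<phi> z = 0) \<and> (\<forall>f\<in>H. (\<lambda>z. \<phi> z * f z) \<in> H)}"

text \<open>Normal (sigma-weak) functionals T |-> sum_n <T x_n, y_n> with sum ||x_n|| ||y_n|| < oo.
  The weak-* topology of a WOT-closed subalgebra of B(H) is the relative sigma-weak
  topology of B(H), i.e. the initial topology of these functionals.\<close>
definition tc_pair :: "('x \<Rightarrow> complex) set \<Rightarrow> (('x \<Rightarrow> complex) \<Rightarrow> ('x \<Rightarrow> complex) \<Rightarrow> complex)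
     \<Rightarrow> (nat \<Rightarrow> 'x \<Rightarrow> complex) \<Rightarrow> (nat \<Rightarrow> 'x \<Rightarrow> complex) \<Rightarrow> bool" where
  "tc_pair H ip xs ys \<longleftrightarrow> (\<forall>n. xs n \<in> H \<and> ys n \<in> H) \<and>
      summable (\<lambda>n. hnorm ip (xs n) * hnorm ip (ys n))"

definition tc_functional :: "(('x \<Rightarrow> complex) \<Rightarrow> ('x \<Rightarrow> complex) \<Rightarrow> complex)
     \<Rightarrow> (nat \<Rightarrow> 'x \<Rightarrow> complex) \<Rightarrow> (nat \<Rightarrow> 'x \<Rightarrow> complex) \<Rightarrow> ('x \<Rightarrow> complex) \<Rightarrow> complex" where
  "tc_functional ip xs ys \<phi> = (\<Sum>n. ip (\<lambda>z. \<phi> z * xs n z) (ys n))"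

definition weak_star_top :: "'x set \<Rightarrow> ('x \<Rightarrow> complex) set
     \<Rightarrow> (('x \<Rightarrow> complex) \<Rightarrow> ('x \<Rightarrow> complex) \<Rightarrow> complex) \<Rightarrow> ('x \<Rightarrow> complex) topology" where
  "weak_star_top X H ip = topology_generated_by
     {{\<phi> \<in> mult X H. tc_functional ip xs ys \<phi> \<in> U} | xs ys U. tc_pair H ip xs ys \<and> open U}"

definition is_poly :: "(complex^'n \<Rightarrow> complex) \<Rightarrow> bool" where
  "is_poly p \<longleftrightarrow> (\<exists>F c. finite F \<and>
      p = (\<lambda>z. \<Sum>\<alpha>\<in>F. c \<alpha> * (\<Prod>i\<in>UNIV. (z $ i) ^ (\<alpha> i :: nat))))"

definition restrict0 :: "'x set \<Rightarrow> ('x \<Rightarrow> complex) \<Rightarrow> ('x \<Rightarrow> complex)" where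
  "restrict0 X f = (\<lambda>z. if z \<in> X then f z else 0)"

text \<open>A complex regular Borel measure on the sphere is represented as mu = h nu, where nu is a
  finite positive Borel measure concentrated on the sphere and h is nu-integrable;
  then |mu| = |h| nu.  (Every complex Borel measure has this form, with nu = |mu|.)\<close>
definition sphere_cmeasure :: "(complex^'n) measure \<Rightarrow> (complex^'n \<Rightarrow> complex) \<Rightarrow> bool" where
  "sphere_cmeasure \<nu> h \<longleftrightarrow> sets \<nu> = sets borel \<and> finite_measure \<nu> \<and>
      emeasure \<nu> (UNIV - sphere 0 1) = 0 \<and> integrable \<nu> h"

definition henkin :: "(complex^'n \<Rightarrow> complex) set
     \<Rightarrow> (((complex^'n) \<Rightarrow> complex) \<Rightarrow> ((complex^'n) \<Rightarrow> complex) \<Rightarrow> complex)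
     \<Rightarrow> (complex^'n) measure \<Rightarrow> (complex^'n \<Rightarrow> complex) \<Rightarrow> bool" where
  "henkin H ip \<nu> h \<longleftrightarrow> (\<exists>\<Phi>.
      (\<forall>\<phi>\<in>mult (ball 0 1) H. \<forall>\<psi>\<in>mult (ball 0 1) H. \<Phi> (\<lambda>z. \<phi> z + \<psi> z) = \<Phi> \<phi> + \<Phi> \<psi>) \<and>
      (\<forall>c. \<forall>\<phi>\<in>mult (ball 0 1) H. \<Phi> (\<lambda>z. c * \<phi> z) = c * \<Phi> \<phi>) \<and>
      continuous_map (weak_star_top (ball 0 1) H ip) euclidean \<Phi> \<and>
      (\<forall>p. is_poly p \<longrightarrow> \<Phi> (restrict0 (ball 0 1) p) = (LINT z|\<nu>. p z * h z)))"

definition totally_null :: "(complex^'n \<Rightarrow> complex) set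
     \<Rightarrow> (((complex^'n) \<Rightarrow> complex) \<Rightarrow> ((complex^'n) \<Rightarrow> complex) \<Rightarrow> complex)
     \<Rightarrow> (complex^'n) set \<Rightarrow> bool" where
  "totally_null H ip E \<longleftrightarrow> (\<forall>\<nu> h. sphere_cmeasure \<nu> h \<and> henkin H ip \<nu> h \<longrightarrow>
      (\<integral>\<^sup>+ z\<in>E. ennreal (cmod (h z)) \<partial>\<nu>) = 0)"

definition energy :: "real \<Rightarrow> (complex^'n) measure \<Rightarrow> ennreal" where
  "energy a \<mu> = (\<integral>\<^sup>+ z. (\<integral>\<^sup>+ w. kernel_abs a z w \<partial>\<mu>) \<partial>\<mu>)"

definition cap_sqrt :: "real \<Rightarrow> (complex^'n) set \<Rightarrow> ennreal" where
  "cap_sqrt a E = (SUP \<mu> \<in> {\<mu>. sets \<mu> = sets borel \<and> finite_measure \<mu> \<and>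
        emeasure \<mu> (UNIV - E) = 0 \<and> energy a \<mu> \<le> 1}. emeasure \<mu> E)"

definition capacity :: "real \<Rightarrow> (complex^'n) set \<Rightarrow> ennreal" where
  "capacity a E = (cap_sqrt a E)\<^sup>2"

end

theory Submission
  imports Defs
begin



locale rk =
  fixes X :: "'x set" and K :: "'x \<Rightarrow> 'x \<Rightarrow> complex"
    and H :: "('x \<Rightarrow> complex) set" and ip
  assumes R: "rkhs_on X K H ip"
begin

lemma c1: "\<forall>f\<in>H. \<forall>z. z \<notin> X \<longrightarrow> f z = 0"
  using R unfolding rkhs_on_def by (rule conjunct1)
lemma c2: "(\<lambda>z. 0) \<in> H"
  using R unfolding rkhs_on_def by (rule conjunct1[OF conjunct2])
lemma c3: "\<forall>f\<in>H. \<forall>g\<in>H. (\<lambda>z. f z + g z) \<in> H"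
  using R unfolding rkhs_on_def by (rule conjunct1[OF conjunct2[OF conjunct2]])
lemma c4: "\<forall>c. \<forall>f\<in>H. (\<lambda>z. c * f z) \<in> H"
  using R unfolding rkhs_on_def by (rule conjunct1[OF conjunct2[OF conjunct2[OF conjunct2]]])
lemma c5: "\<forall>f\<in>H. \<forall>g\<in>H. \<forall>h\<in>H. ip (\<lambda>z. f z + g z) h = ip f h + ip g h"
  using R unfolding rkhs_on_def by (rule conjunct1[OF conjunct2[OF conjunct2[OF conjunct2[OF conjunct2]]]])
lemma c6: "\<forall>c. \<forall>f\<in>H. \<forall>g\<in>H. ip (\<lambda>z. c * f z) g = c * ip f g"
  using R unfolding rkhs_on_def by (rule conjunct1[OF conjunct2[OF conjunct2[OF conjunct2[OF conjunct2[OF conjunct2]]]]])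
lemma c7: "\<forall>f\<in>H. \<forall>g\<in>H. ip g f = cnj (ip f g)"
  using R unfolding rkhs_on_def by (rule conjunct1[OF conjunct2[OF conjunct2[OF conjunct2[OF conjunct2[OF conjunct2[OF conjunct2]]]]]])
lemma c8: "\<forall>f\<in>H. 0 \<le> Re (ip f f) \<and> (ip f f = 0 \<longrightarrow> f = (\<lambda>z. 0))"
  using R unfolding rkhs_on_def by (rule conjunct1[OF conjunct2[OF conjunct2[OF conjunct2[OF conjunct2[OF conjunct2[OF conjunct2[OF conjunct2]]]]]]])
lemma c9: "\<forall>s. (\<forall>n. s n \<in> H) \<and>
          (\<forall>e>0. \<exists>N. \<forall>m\<ge>N. \<forall>n\<ge>N. hnorm ip (\<lambda>z. s m z - s n z) < e)
          \<longrightarrow> (\<exists>g\<in>H. (\<lambda>n. hnorm ip (\<lambda>z. s n z - g z)) \<longlonglongrightarrow> 0)"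
  using R unfolding rkhs_on_def by (rule conjunct1[OF conjunct2[OF conjunct2[OF conjunct2[OF conjunct2[OF conjunct2[OF conjunct2[OF conjunct2[OF conjunct2]]]]]]]])
lemma c10: "\<forall>w\<in>X. kfun X K w \<in> H \<and> (\<forall>f\<in>H. ip f (kfun X K w) = f w)"
  using R unfolding rkhs_on_def by (rule conjunct2[OF conjunct2[OF conjunct2[OF conjunct2[OF conjunct2[OF conjunct2[OF conjunct2[OF conjunct2[OF conjunct2]]]]]]]])

lemmas zero_in = c2
lemmas add_in = c3[rule_format]
lemmas smult_in = c4[rule_format]
lemmas ip_add1 = c5[rule_format]
lemmas ip_smult1 = c6[rule_format]
lemmas herm = c7[rule_format]
lemma pos: "f \<in> H \<Longrightarrow> 0 \<le> Re (ip f f)" using c8 by blast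
lemma definite: "f \<in> H \<Longrightarrow> ip f f = 0 \<Longrightarrow> f = (\<lambda>z. 0)" using c8 by blast
lemma kfun_in: "w \<in> X \<Longrightarrow> kfun X K w \<in> H" using c10 by blast
lemma repro: "w \<in> X \<Longrightarrow> f \<in> H \<Longrightarrow> ip f (kfun X K w) = f w" using c10 by blast
lemmas vanish = c1[rule_format]

lemma diff_in: "f \<in> H \<Longrightarrow> g \<in> H \<Longrightarrow> (\<lambda>z. f z - g z) \<in> H"
proof -
  assume "f \<in> H" "g \<in> H"
  then have "(\<lambda>z. f z + (-1) * g z) \<in> H" by (intro add_in smult_in)
  then show ?thesis by simp
qed

lemma ip_add2: "f \<in> H \<Longrightarrow> g \<in> H \<Longrightarrow> h \<in> H \<Longrightarrow> ip h (\<lambda>z. f z + g z) = ip h f + ip h g"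
proof -
  assume a: "f \<in> H" "g \<in> H" "h \<in> H"
  show ?thesis using herm[OF add_in[OF a(1,2)] a(3)] ip_add1[OF a] herm[OF a(1,3)] herm[OF a(2,3)] by simp
qed

lemma ip_smult2: "f \<in> H \<Longrightarrow> g \<in> H \<Longrightarrow> ip g (\<lambda>z. c * f z) = cnj c * ip g f"
proof -
  assume a: "f \<in> H" "g \<in> H"
  show ?thesis using herm[OF smult_in[OF a(1)] a(2)] ip_smult1[OF a, of c] herm[OF a] by simp
qed

lemma ip_diff1: "f \<in> H \<Longrightarrow> g \<in> H \<Longrightarrow> h \<in> H \<Longrightarrow> ip (\<lambda>z. f z - g z) h = ip f h - ip g h"
proof -
  assume a: "f \<in> H" "g \<in> H" "h \<in> H"
  have "ip (\<lambda>z. f z + (-1) * g z) h = ip f h + ip (\<lambda>z. (-1) * g z) h"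
    using a by (intro ip_add1 smult_in)
  also have "\<dots> = ip f h - ip g h" using a ip_smult1[of g h "-1"] by simp
  finally show ?thesis by simp
qed

lemma ip_diff2: "f \<in> H \<Longrightarrow> g \<in> H \<Longrightarrow> h \<in> H \<Longrightarrow> ip h (\<lambda>z. f z - g z) = ip h f - ip h g"
proof -
  assume a: "f \<in> H" "g \<in> H" "h \<in> H"
  show ?thesis using herm[OF diff_in[OF a(1,2)] a(3)] ip_diff1[OF a] herm[OF a(1,3)] herm[OF a(2,3)] by simp
qed

lemma ip_zero1: "g \<in> H \<Longrightarrow> ip (\<lambda>z. 0) g = 0"
proof -
  assume "g \<in> H"
  then have "ip (\<lambda>z. 0 * (0::complex)) g = 0 * ip (\<lambda>z. 0) g" using zero_in by (intro ip_smult1)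
  then show ?thesis by simp
qed

lemma ip_zero2: "g \<in> H \<Longrightarrow> ip g (\<lambda>z. 0) = 0"
proof -
  assume a: "g \<in> H"
  show ?thesis using herm[OF zero_in a] ip_zero1[OF a] by simp
qed

lemma sum_in: "finite I \<Longrightarrow> (\<And>i. i \<in> I \<Longrightarrow> f i \<in> H) \<Longrightarrow> (\<lambda>z. \<Sum>i\<in>I. c i * f i z) \<in> H"
proof (induction I rule: finite_induct)
  case empty then show ?case using zero_in by simp
next
  case (insert x F)
  then have "(\<lambda>z. c x * f x z + (\<Sum>i\<in>F. c i * f i z)) \<in> H"
    by (intro add_in smult_in) auto
  then show ?case using insert by simp
qed

lemma ip_sum1: "finite I \<Longrightarrow> (\<And>i. i \<in> I \<Longrightarrow> f i \<in> H) \<Longrightarrow> g \<in> H \<Longrightarrow>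
   ip (\<lambda>z. \<Sum>i\<in>I. c i * f i z) g = (\<Sum>i\<in>I. c i * ip (f i) g)"
proof (induction I rule: finite_induct)
  case empty then show ?case using ip_zero1 by simp
next
  case (insert x F)
  have "ip (\<lambda>z. c x * f x z + (\<Sum>i\<in>F. c i * f i z)) g
      = ip (\<lambda>z. c x * f x z) g + ip (\<lambda>z. \<Sum>i\<in>F. c i * f i z) g"
    using insert by (intro ip_add1 smult_in sum_in) auto
  then show ?case using insert by (simp add: ip_smult1)
qed

lemma ip_sum2: "finite I \<Longrightarrow> (\<And>i. i \<in> I \<Longrightarrow> f i \<in> H) \<Longrightarrow> g \<in> H \<Longrightarrow>
   ip g (\<lambda>z. \<Sum>i\<in>I. c i * f i z) = (\<Sum>i\<in>I. cnj (c i) * ip g (f i))"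
proof -
  assume a: "finite I" "\<And>i. i \<in> I \<Longrightarrow> f i \<in> H" "g \<in> H"
  have "ip g (\<lambda>z. \<Sum>i\<in>I. c i * f i z) = cnj (ip (\<lambda>z. \<Sum>i\<in>I. c i * f i z) g)"
    using a by (intro herm sum_in) auto
  also have "\<dots> = (\<Sum>i\<in>I. cnj (c i) * cnj (ip (f i) g))" using a by (simp add: ip_sum1)
  also have "\<dots> = (\<Sum>i\<in>I. cnj (c i) * ip g (f i))" 
  proof (intro sum.cong refl)
    fix i assume "i \<in> I"
    show "cnj (c i) * cnj (ip (f i) g) = cnj (c i) * ip g (f i)"
      using herm[OF a(2)[OF \<open>i \<in> I\<close>] a(3)] by simp
  qed
  finally show ?thesis .
qed

lemma ip_self_real: "f \<in> H \<Longrightarrow> ip f f = of_real (Re (ip f f))"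
proof -
  assume a: "f \<in> H"
  have "cnj (ip f f) = ip f f" using herm[OF a a] by (rule sym)
  then have "Im (ip f f) = 0" by (simp add: complex_eq_iff)
  then show ?thesis by (simp add: complex_eq_iff)
qed

lemma cauchy_schwarz: assumes f: "f \<in> H" and g: "g \<in> H"
  shows "cmod (ip f g) \<le> hnorm ip f * hnorm ip g"
proof (cases "ip g g = 0")
  case True
  then have "g = (\<lambda>z. 0)" using definite g by blast
  then show ?thesis using ip_zero2 f zero_in by (simp add: hnorm_def)
next
  case False
  define B where "B = Re (ip g g)"
  define A where "A = Re (ip f f)"
  define c where "c = ip f g"
  have gg: "ip g g = of_real B" using ip_self_real g B_def by simp
  have ff: "ip f f = of_real A" using ip_self_real f A_def by simp
  have B0: "B > 0" using pos[OF g] False gg unfolding B_def by (auto simp: less_eq_real_def)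
  define t where "t = c / of_real B"
  define h where "h = (\<lambda>z. f z - t * g z)"
  have tg: "(\<lambda>z. t * g z) \<in> H" using g by (rule smult_in)
  have hH: "h \<in> H" unfolding h_def using f tg by (rule diff_in)
  have e1: "ip h h = ip f h - ip (\<lambda>z. t * g z) h" using ip_diff1[OF f tg hH] unfolding h_def[symmetric] by simp
  have e2: "ip f h = ip f f - cnj t * ip f g" using ip_diff2[OF f tg f] ip_smult2[OF g f] by (simp add: h_def)
  have e3: "ip (\<lambda>z. t * g z) h = t * (ip g f - cnj t * ip g g)" using ip_smult1[OF g hH] ip_diff2[OF f tg g] ip_smult2[OF g g] by (simp add: h_def)
  have hh: "ip h h = ip f f - cnj t * c - t * (cnj c - cnj t * ip g g)"
    using e1 e2 e3 herm[OF f g] c_def by simp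
  have cc: "c * cnj c = of_real ((cmod c)^2)" using complex_norm_square[of c] by simp
  have Bc: "complex_of_real B \<noteq> 0" using B0 by simp
  have x1: "cnj t * c = (c * cnj c) / of_real B" unfolding t_def by simp
  have x2: "t * cnj c = (c * cnj c) / of_real B" unfolding t_def by simp
  have x3: "t * cnj t * ip g g = (c * cnj c) / of_real B" unfolding t_def gg using Bc
    using Bc by (simp add: power2_eq_square)
  have "ip h h = ip f f - cnj t * c - t * cnj c + t * cnj t * ip g g" using hh by (simp add: algebra_simps)
  also have "\<dots> = ip f f - (c * cnj c) / of_real B"
    unfolding x1 x2 x3 by simp
  also have "\<dots> = of_real (A - (cmod c)^2 / B)" unfolding ff cc by simp
  finally have "ip h h = of_real (A - (cmod c)^2 / B)" .
  then have "0 \<le> A - (cmod c)^2 / B" using pos[OF hH] by simp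
  then have "(cmod c)^2 \<le> A * B" using B0 by (simp add: field_simps)
  then have "cmod c \<le> sqrt (A * B)" by (simp add: real_le_rsqrt)
  then show ?thesis unfolding hnorm_def c_def A_def B_def by (simp add: real_sqrt_mult)
qed

end



definition kk :: "real \<Rightarrow> complex \<Rightarrow> complex" where
  "kk a u = (if a > 0 then (1 - u) powr (- complex_of_real a) else Ln (exp 1 / (1 - u)))"

definition k0 :: "real \<Rightarrow> complex \<Rightarrow> complex" where
  "k0 a u = (if Re u < 1 then kk a u else 0)"

lemma kernelD_kk: "kernelD a z w = kk a (cinner z w)"
  by (simp add: kernelD_def kk_def)

lemma kk_0: "kk a 0 = 1"
proof (cases "a > 0")
  case True then show ?thesis by (simp add: kk_def)
next
  case False
  have "Ln (exp 1) = (1::complex)" by (rule Ln_exp) auto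
  then show ?thesis using False by (simp add: kk_def)
qed

lemma Re_e_div_pos: "Re u < 1 \<Longrightarrow> 0 < Re (exp 1 / (1 - u))"
proof -
  assume "Re u < 1"
  then have "0 < Re (1 - u)" by simp
  moreover have "1 - u \<noteq> 0" using \<open>Re u < 1\<close> by auto
  moreover have "(exp 1::complex) = of_real (exp 1)" by (metis exp_of_real of_real_1)
  ultimately show ?thesis
    by (simp add: Re_divide')
qed

lemma kk_cont: "continuous_on {u. Re u < 1} (kk a)"
proof (cases "a > 0")
  case True
  have "continuous_on {u. Re u < 1} (\<lambda>u. (1 - u) powr (- complex_of_real a))"
    by (intro continuous_on_powr_complex continuous_intros) auto
  then show ?thesis using True by (simp add: kk_def)
next
  case False
  have "continuous_on {u. Re u < 1} (\<lambda>u. Ln (exp 1 / (1 - u)))"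
  proof (rule continuous_on_Ln')
    show "continuous_on {u. Re u < 1} (\<lambda>u. exp 1 / (1 - u))"
      by (intro continuous_intros) auto
    fix u assume "u \<in> {u. Re u < 1}"
    then show "exp 1 / (1 - u) \<notin> \<real>\<^sub>\<le>\<^sub>0" using Re_e_div_pos[of u]
      by (auto simp: complex_nonpos_Reals_iff)
  qed
  then show ?thesis using False by (simp add: kk_def)
qed

lemma open_S: "open {u::complex. Re u < 1}"
  by (simp add: open_halfspace_Re_lt)

lemma k0_eq: "Re u < 1 \<Longrightarrow> k0 a u = kk a u" by (simp add: k0_def)

lemma k0_meas: "k0 a \<in> borel_measurable borel"
proof -
  have "(\<lambda>x. indicator {u. Re u < 1} x *\<^sub>R kk a x) \<in> borel_measurable borel"
    using open_S kk_cont by (intro borel_measurable_continuous_on_indicator) auto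
  moreover have "(\<lambda>x. indicator {u. Re u < 1} x *\<^sub>R kk a x) = k0 a"
    by (auto simp: k0_def indicator_def fun_eq_iff)
  ultimately show ?thesis by simp
qed

lemma k0_isCont: "Re u < 1 \<Longrightarrow> isCont (k0 a) u"
proof -
  assume u: "Re u < 1"
  have "continuous_on {u. Re u < 1} (k0 a)"
    using kk_cont by (rule continuous_on_cong[THEN iffD1, rotated 2]) (auto simp: k0_def)
  then show ?thesis using open_S u continuous_on_eq_continuous_at by blast
qed

lemma geom1: fixes t :: complex and \<rho> :: real
  assumes "cmod t \<le> 1" "0 \<le> \<rho>" "\<rho> \<le> 1"
  shows "cmod (1 - t) \<le> 2 * cmod (1 - of_real \<rho> * t)"
proof -
  have "1 - t = (1 - of_real \<rho> * t) - of_real (1 - \<rho>) * t" by (simp add: algebra_simps)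
  then have "cmod (1 - t) \<le> cmod (1 - of_real \<rho> * t) + cmod (of_real (1 - \<rho>) * t)"
    by (metis norm_triangle_ineq4)
  also have "cmod (of_real (1 - \<rho>) * t) \<le> 1 - \<rho>"
  proof -
    have "cmod (of_real (1 - \<rho>) * t) = \<bar>1 - \<rho>\<bar> * cmod t" by (simp only: norm_mult norm_of_real)
    then show ?thesis using assms by (simp add: mult_left_le)
  qed
  also have "1 - \<rho> \<le> 1 - \<rho> * cmod t" using assms by (simp add: mult_left_le)
  also have "1 - \<rho> * cmod t \<le> cmod (1 - of_real \<rho> * t)"
    by (metis norm_one norm_of_real norm_mult abs_of_nonneg assms(2) norm_triangle_ineq2)
  finally show ?thesis by simp
qed

lemma geom2: fixes t :: complex and \<rho> :: real
  assumes "cmod t \<le> 1" "0 \<le> \<rho>" "\<rho> \<le> 1"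
  shows "cmod (1 - of_real \<rho> * t) \<le> 2"
proof -
  have "cmod (1 - of_real \<rho> * t) \<le> 1 + cmod (of_real \<rho> * t)" by (metis norm_one norm_triangle_ineq4)
  also have "cmod (of_real \<rho> * t) \<le> 1" using assms by (simp add: norm_mult mult_le_one)
  finally show ?thesis by simp
qed

lemma cmod_Ln_le: "v \<noteq> 0 \<Longrightarrow> cmod (Ln v) \<le> \<bar>ln (cmod v)\<bar> + pi"
proof -
  assume v: "v \<noteq> 0"
  have "cmod (Ln v) \<le> \<bar>Re (Ln v)\<bar> + \<bar>Im (Ln v)\<bar>" by (rule cmod_le)
  moreover have "\<bar>Im (Ln v)\<bar> \<le> pi" using mpi_less_Im_Ln[OF v] Im_Ln_le_pi[OF v] by auto
  ultimately show ?thesis using v by simp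
qed

lemma kk_bound: fixes t :: complex and \<rho> :: real
  assumes a: "0 \<le> a" "a < 1" and t: "cmod t \<le> 1" "t \<noteq> 1" and r: "0 \<le> \<rho>" "\<rho> \<le> 1"
  shows "cmod (kk a (of_real \<rho> * t)) \<le> 2 * cmod (kk a t) + 8"
proof -
  have g1: "cmod (1 - t) \<le> 2 * cmod (1 - of_real \<rho> * t)" using geom1 t r by blast
  have g2: "cmod (1 - of_real \<rho> * t) \<le> 2" using geom2 t r by blast
  have t0: "0 < cmod (1 - t)" using t by auto
  then have rt0: "0 < cmod (1 - of_real \<rho> * t)" using g1 by linarith
  show ?thesis
  proof (cases "a > 0")
    case True
    have "cmod (kk a (of_real \<rho> * t)) = cmod (1 - of_real \<rho> * t) powr (- a)"
      using True by (simp add: kk_def norm_powr_real_powr')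
    also have "\<dots> \<le> (cmod (1 - t) / 2) powr (- a)"
      using g1 t0 True by (intro powr_mono2') auto
    also have "\<dots> = 2 powr a * cmod (1 - t) powr (- a)"
      using t0 by (simp add: powr_divide powr_minus divide_simps)
    also have "\<dots> \<le> 2 * cmod (1 - t) powr (- a)"
    proof -
      have "2 powr a \<le> 2 powr (1::real)" using a by (intro powr_mono) auto
      then show ?thesis by (intro mult_right_mono) auto
    qed
    also have "cmod (1 - t) powr (- a) = cmod (kk a t)"
      using True by (simp add: kk_def norm_powr_real_powr')
    finally show ?thesis by simp
  next
    case False
    have e0: "(exp 1 :: complex) \<noteq> 0" by simp
    have n1: "cmod (exp 1 / (1 - of_real \<rho> * t)) = exp 1 / cmod (1 - of_real \<rho> * t)"
      by (simp add: norm_divide exp_of_real[symmetric] del: exp_of_real)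
    have n2: "cmod (exp 1 / (1 - t)) = exp 1 / cmod (1 - t)"
      by (simp add: norm_divide exp_of_real[symmetric] del: exp_of_real)
    have "cmod (kk a (of_real \<rho> * t)) \<le> \<bar>ln (exp 1 / cmod (1 - of_real \<rho> * t))\<bar> + pi"
      using False cmod_Ln_le[of "exp 1 / (1 - of_real \<rho> * t)"] rt0 n1 by (simp add: kk_def)
    also have "ln (exp 1 / cmod (1 - of_real \<rho> * t)) = 1 - ln (cmod (1 - of_real \<rho> * t))"
      using rt0 by (simp add: ln_div)
    also have "\<bar>1 - ln (cmod (1 - of_real \<rho> * t))\<bar> \<le> 1 + \<bar>ln (cmod (1 - t))\<bar> + ln 2"
    proof -
      have "ln (cmod (1 - of_real \<rho> * t)) \<le> ln 2" using g2 rt0 by simp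
      moreover have "ln (cmod (1 - t)) - ln 2 \<le> ln (cmod (1 - of_real \<rho> * t))"
      proof -
        have "ln (cmod (1 - t) / 2) \<le> ln (cmod (1 - of_real \<rho> * t))" using g1 t0 by (subst ln_le_cancel_iff) auto
        then show ?thesis using t0 by (simp add: ln_div)
      qed
      moreover have "0 \<le> ln (2::real)" by simp
      ultimately show ?thesis by linarith
    qed
    also have "\<bar>ln (cmod (1 - t))\<bar> \<le> 1 + cmod (kk a t)"
    proof -
      have "Re (kk a t) = 1 - ln (cmod (1 - t))"
        using False t0 n2 by (simp add: kk_def ln_div)
      then show ?thesis using abs_Re_le_cmod[of "kk a t"] by linarith
    qed
    finally have "cmod (kk a (of_real \<rho> * t)) \<le> 2 + cmod (kk a t) + ln 2 + pi" by simp
    moreover have "ln (2::real) < 1" using ln_2_less_1 .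
    moreover have "pi < 4" using pi_less_4 .
    moreover have "0 \<le> cmod (kk a t)" by simp
    ultimately show ?thesis by linarith
  qed
qed

lemma cinner_bound: "cmod (cinner z w) \<le> norm z * norm w"
proof -
  have "cmod (cinner z w) \<le> (\<Sum>i\<in>UNIV. cmod (z $ i * cnj (w $ i)))"
    unfolding cinner_def by (rule norm_sum)
  also have "\<dots> = (\<Sum>i\<in>UNIV. \<bar>cmod (z $ i)\<bar> * \<bar>cmod (w $ i)\<bar>)" by (simp add: norm_mult)
  also have "\<dots> \<le> L2_set (\<lambda>i. cmod (z $ i)) UNIV * L2_set (\<lambda>i. cmod (w $ i)) UNIV"
    by (rule L2_set_mult_ineq)
  also have "\<dots> = norm z * norm w" by (simp add: norm_vec_def)
  finally show ?thesis .
qed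

lemma vec_scaleR_nth: "(r *\<^sub>R z) $ i = complex_of_real r * (z $ i)"
  by (metis vector_scaleR_component scaleR_conv_of_real)

lemma cinner_scaleR1: "cinner (r *\<^sub>R z) w = of_real r * cinner z w"
  unfolding cinner_def vec_scaleR_nth by (simp add: sum_distrib_left mult.assoc)

lemma cinner_scaleR2: "cinner z (r *\<^sub>R w) = of_real r * cinner z w"
  unfolding cinner_def vec_scaleR_nth by (simp add: sum_distrib_left algebra_simps)

lemma cinner_diff1: "cinner z w - cinner z' w = cinner (z - z') w"
  by (simp add: cinner_def sum_subtractf[symmetric] algebra_simps)

lemma cinner_diff2: "cinner z w - cinner z w' = cinner z (w - w')"
  by (simp add: cinner_def sum_subtractf[symmetric] algebra_simps)

lemma cinner_zero2: "cinner z 0 = 0" by (simp add: cinner_def)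




lemma integral_finite_range:
  fixes g :: "'b \<Rightarrow> complex"
  assumes fm: "finite_measure M" and D: "finite D" and s: "s \<in> measurable M N"
    and sD: "\<And>x. x \<in> space M \<Longrightarrow> s x \<in> D" and single: "\<And>d. d \<in> D \<Longrightarrow> {d} \<in> sets N"
  shows "integrable M (\<lambda>x. g (s x))"
    and "(LINT x|M. g (s x)) = (\<Sum>d\<in>D. of_real (measure M (s -` {d} \<inter> space M)) * g d)"
proof -
  interpret finite_measure M by (rule fm)
  define A where "A d = s -` {d} \<inter> space M" for d
  have A: "A d \<in> sets M" if "d \<in> D" for d
    unfolding A_def using s single[OF that] by (rule measurable_sets)
  have pw: "g (s x) = (\<Sum>d\<in>D. indicator (A d) x *\<^sub>R g d)" if x: "x \<in> space M" for x
  proof -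
    have "(\<Sum>d\<in>D. indicator (A d) x *\<^sub>R g d) = (\<Sum>d\<in>D. if d = s x then g d else 0)"
      using x by (intro sum.cong) (auto simp: A_def indicator_def)
    also have "\<dots> = g (s x)" using D sD[OF x] by simp
    finally show ?thesis by simp
  qed
  have int: "integrable M (\<lambda>x. \<Sum>d\<in>D. indicator (A d) x *\<^sub>R g d)"
    by (rule Bochner_Integration.integrable_sum) (auto intro!: integrable_scaleR_left integrable_real_indicator A simp: less_top[symmetric])
  show "integrable M (\<lambda>x. g (s x))"
  proof -
    have "integrable M (\<lambda>x. g (s x)) = integrable M (\<lambda>x. \<Sum>d\<in>D. indicator (A d) x *\<^sub>R g d)"
      by (intro Bochner_Integration.integrable_cong) (auto simp: pw)
    then show ?thesis using int by simp
  qed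
  have "(LINT x|M. g (s x)) = integral\<^sup>L M (\<lambda>x. \<Sum>d\<in>D. indicator (A d) x *\<^sub>R g d)"
    by (intro Bochner_Integration.integral_cong) (auto simp: pw)
  also have "\<dots> = (\<Sum>d\<in>D. LINT x|M. indicator (A d) x *\<^sub>R g d)"
    by (rule Bochner_Integration.integral_sum) (auto intro!: integrable_scaleR_left integrable_real_indicator A simp: less_top[symmetric])
  also have "\<dots> = (\<Sum>d\<in>D. of_real (measure M (A d)) * g d)"
  proof (intro sum.cong refl)
    fix d assume "d \<in> D"
    have "(LINT x|M. indicator (A d) x *\<^sub>R g d) = (LINT x|M. indicator (A d) x) *\<^sub>R g d"
      by (rule Bochner_Integration.integral_scaleR_left) (auto intro!: integrable_real_indicator A \<open>d \<in> D\<close> simp: less_top[symmetric])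
    also have "\<dots> = measure M (A d) *\<^sub>R g d" using A \<open>d \<in> D\<close> sets.sets_into_space
      by (simp add: Int_absorb2)
    finally show "(LINT x|M. indicator (A d) x *\<^sub>R g d) = of_real (measure M (A d)) * g d"
      by (simp add: scaleR_conv_of_real)
  qed
  finally show "(LINT x|M. g (s x)) = (\<Sum>d\<in>D. of_real (measure M (s -` {d} \<inter> space M)) * g d)"
    by (simp add: A_def)
qed

fun sel :: "real \<Rightarrow> 'a::metric_space \<Rightarrow> 'a list \<Rightarrow> 'a \<Rightarrow> 'a" where
  "sel \<delta> d [] x = d"
| "sel \<delta> d (c # cs) x = (if x \<in> ball c \<delta> then c else sel \<delta> d cs x)"

lemma sel_meas: "sel \<delta> d cs \<in> borel_measurable borel"
proof (induction cs)
  case Nil then show ?case by simp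
next
  case (Cons c cs)
  have "(\<lambda>x. if x \<in> ball c \<delta> then c else sel \<delta> d cs x) \<in> borel_measurable borel"
    using Cons by (intro measurable_If_set) auto
  then show ?case by (simp add: fun_eq_iff[symmetric] del: mem_ball)
qed

lemma sel_in: "sel \<delta> d cs x \<in> insert d (set cs)"
  by (induction cs) auto

lemma sel_close: "x \<in> (\<Union>c\<in>set cs. ball c \<delta>) \<Longrightarrow> dist (sel \<delta> d cs x) x < \<delta>"
  by (induction cs) (auto simp del: mem_ball simp: mem_ball)

lemma cover_list:
  fixes E :: "'a::metric_space set"
  assumes "compact E" "0 < \<delta>"
  shows "\<exists>cs. set cs \<subseteq> E \<and> E \<subseteq> (\<Union>c\<in>set cs. ball c \<delta>)"
proof -
  have "E \<subseteq> (\<Union>c\<in>E. ball c \<delta>)" using assms by auto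
  then obtain C where C: "C \<subseteq> E" "finite C" "E \<subseteq> (\<Union>c\<in>C. ball c \<delta>)"
    using compactE_image[OF assms(1), of E "\<lambda>c. ball c \<delta>"] by auto
  then obtain cs where "set cs = C" using finite_list by blast
  then show ?thesis using C by auto
qed




definition ci :: "((complex^'n) \<times> (complex^'n)) \<Rightarrow> complex" where
  "ci p = cinner (fst p) (snd p)"

lemma cinner_cont: "continuous_on UNIV (\<lambda>p::((complex^'n) \<times> (complex^'n)). cinner (fst p) (snd p))"
  unfolding cinner_def by (intro continuous_intros)

lemma ci_meas: "ci \<in> borel_measurable borel"
  unfolding ci_def by (rule borel_measurable_continuous_onI[OF cinner_cont])

lemma Re_lt1: "cmod t \<le> 1 \<Longrightarrow> t \<noteq> 1 \<Longrightarrow> Re t < 1"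
proof (rule ccontr)
  assume t: "cmod t \<le> 1" "t \<noteq> 1" "\<not> Re t < 1"
  have "Re t \<le> 1" using t(1) abs_Re_le_cmod[of t] by linarith
  then have r1: "Re t = 1" using t(3) by linarith
  have "(Re t)^2 + (Im t)^2 \<le> 1" using t(1) by (simp add: cmod_def)
  then have "(Im t)^2 \<le> 0" using r1 by simp
  then have "Im t = 0" by (meson power_zero_numeral zero_eq_power2 antisym zero_le_power2)
  then show False using r1 t(2) by (simp add: complex_eq_iff)
qed

lemma poly_cont: "is_poly p \<Longrightarrow> continuous_on UNIV p"
  unfolding is_poly_def by (auto intro!: continuous_intros)


locale core =
  fixes a :: real and E :: "(complex^'n) set" and H :: "(complex^'n \<Rightarrow> complex) set"
    and ip :: "(complex^'n \<Rightarrow> complex) \<Rightarrow> (complex^'n \<Rightarrow> complex) \<Rightarrow> complex"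
    and \<mu> :: "(complex^'n) measure"
  assumes a0: "0 \<le> a" and a1: "a < 1" and cE: "compact E" and Esph: "E \<subseteq> sphere 0 1"
    and R: "rkhs_on (ball 0 1) (kernelD a) H ip"
    and mu_sets: "sets \<mu> = sets borel" and mu_fin: "finite_measure \<mu>"
    and mu_E: "emeasure \<mu> (UNIV - E) = 0" and en: "energy a \<mu> \<le> 1"
    and Ene: "E \<noteq> {}"
begin

sublocale rk "ball 0 1" "kernelD a" H ip by (unfold_locales) (rule R)
sublocale M: finite_measure \<mu> by (rule mu_fin)
sublocale P: pair_sigma_finite \<mu> \<mu> by unfold_locales

abbreviation "M2 \<equiv> \<mu> \<Otimes>\<^sub>M \<mu>"

lemma space_mu: "space \<mu> = UNIV"
  using sets_eq_imp_space_eq[OF mu_sets] by simp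

lemma meas_mu: "measurable \<mu> N = measurable borel N"
  by (rule measurable_cong_sets[OF mu_sets refl])

lemma sets_M2: "sets M2 = sets (borel :: ((complex^'n) \<times> (complex^'n)) measure)"
proof -
  have "sets M2 = sets ((borel :: (complex^'n) measure) \<Otimes>\<^sub>M (borel :: (complex^'n) measure))"
    by (rule sets_pair_measure_cong[OF mu_sets mu_sets])
  also have "((borel :: (complex^'n) measure) \<Otimes>\<^sub>M (borel :: (complex^'n) measure)) = borel" by (rule Binary_Product_Measure.borel_prod)
  finally show ?thesis .
qed

lemma space_M2: "space M2 = UNIV"
  using sets_eq_imp_space_eq[OF sets_M2] by simp

lemma meas_M2: "measurable M2 N = measurable borel N"
  by (rule measurable_cong_sets[OF sets_M2 refl])

lemma fin_M2: "finite_measure M2"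
  by (rule finite_measure_pair_measure[OF mu_fin mu_fin])

lemma E_borel: "E \<in> sets borel"
  using cE by (simp add: compact_imp_closed)

lemma E_norm: "x \<in> E \<Longrightarrow> norm x = 1"
  using Esph by auto

lemma AE_E: "AE x in \<mu>. x \<in> E"
proof (rule AE_I')
  show "UNIV - E \<in> null_sets \<mu>" using mu_E E_borel mu_sets by (auto simp: null_sets_def)
  show "{x \<in> space \<mu>. x \<notin> E} \<subseteq> UNIV - E" by auto
qed

lemma AE_E2: "AE p in M2. fst p \<in> E \<and> snd p \<in> E"
proof -
  have "{x \<in> space M2. fst x \<in> E \<and> snd x \<in> E} = E \<times> E" by (auto simp: space_M2)
  moreover have "E \<times> E \<in> sets M2" using E_borel mu_sets by simp
  moreover have "AE x in \<mu>. AE y in \<mu>. x \<in> E \<and> y \<in> E" using AE_E by auto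
  ultimately show ?thesis using P.AE_pair_iff[of "\<lambda>x y. x \<in> E \<and> y \<in> E"] by simp
qed


definition G :: "((complex^'n) \<times> (complex^'n)) \<Rightarrow> ennreal" where
  "G p = (if ci p = 1 then \<infinity> else ennreal (cmod (k0 a (ci p))))"

lemma k0ci_meas: "(\<lambda>p. k0 a (of_real \<rho> * ci p)) \<in> borel_measurable borel"
proof -
  have "(\<lambda>p. of_real \<rho> * ci p) \<in> borel_measurable borel" using ci_meas by measurable
  then show ?thesis using k0_meas by (rule measurable_compose)
qed

lemma k0ci_meas2: "(\<lambda>p. k0 a (of_real \<rho> * ci p)) \<in> borel_measurable M2"
  unfolding meas_M2 by (rule k0ci_meas)

lemma G_meas: "G \<in> borel_measurable M2"
proof -
  have m0[measurable]: "(\<lambda>p. k0 a (ci p)) \<in> borel_measurable borel" using k0ci_meas[of 1] by simp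
  have m: "(\<lambda>p. ennreal (cmod (k0 a (ci p)))) \<in> borel_measurable borel" by measurable
  have "ci -` {1} \<inter> space borel \<in> sets borel" using ci_meas by (rule measurable_sets) simp
  then have "{p. ci p = 1} \<in> sets borel" by (simp add: vimage_def)
  then have "(\<lambda>p. if p \<in> {p. ci p = 1} then \<infinity> else ennreal (cmod (k0 a (ci p)))) \<in> borel_measurable borel"
    using m by (intro measurable_If_set) auto
  then show ?thesis unfolding meas_M2 G_def by simp
qed

lemma G_le: "G (z, w) \<le> kernel_abs a z w"
  by (auto simp: G_def kernel_abs_def ci_def kernelD_kk k0_def)

lemma nnG: "(\<integral>\<^sup>+ p. G p \<partial>M2) \<le> 1"
proof -
  have "(\<integral>\<^sup>+ p. G p \<partial>M2) = (\<integral>\<^sup>+ z. \<integral>\<^sup>+ w. G (z, w) \<partial>\<mu> \<partial>\<mu>)"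
    using M.nn_integral_fst[OF G_meas] by simp
  also have "\<dots> \<le> (\<integral>\<^sup>+ z. \<integral>\<^sup>+ w. kernel_abs a z w \<partial>\<mu> \<partial>\<mu>)"
    by (intro nn_integral_mono G_le)
  also have "\<dots> = energy a \<mu>" by (simp add: energy_def)
  finally show ?thesis using en by simp
qed

lemma AE_ne1: "AE p in M2. ci p \<noteq> 1"
proof -
  have "(\<integral>\<^sup>+ p. G p \<partial>M2) \<noteq> \<infinity>" using nnG by (auto simp: top_unique)
  then have "AE p in M2. G p \<noteq> \<infinity>" using nn_integral_PInf_AE[OF G_meas] by simp
  then show ?thesis by eventually_elim (auto simp: G_def)
qed

lemma L_int: "integrable M2 (\<lambda>p. k0 a (ci p))"
proof -
  have m: "(\<lambda>p. k0 a (ci p)) \<in> borel_measurable M2" using k0ci_meas2[of 1] by simp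
  have "(\<integral>\<^sup>+ p. ennreal (norm (k0 a (ci p))) \<partial>M2) \<le> (\<integral>\<^sup>+ p. G p \<partial>M2)"
    by (intro nn_integral_mono) (auto simp: G_def)
  also have "\<dots> < \<infinity>" using nnG by (simp add: order_le_less_trans)
  finally show ?thesis using m by (intro integrableI_bounded) auto
qed


definition r :: "nat \<Rightarrow> real" where "r n = 1 - 1 / (real n + 2)"

lemma r_pos: "0 < r n" and r_lt1: "r n < 1"
  by (auto simp: r_def field_simps)

lemma r_ge: "N \<le> n \<Longrightarrow> 1 - 1 / (real N + 2) \<le> r n"
  unfolding r_def by (intro diff_left_mono divide_left_mono) auto

definition dlP :: "nat \<Rightarrow> real \<Rightarrow> bool" where
  "dlP n d \<longleftrightarrow> 0 < d \<and> d \<le> 1 / (real n + 1) \<and>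
     (\<forall>u\<in>cball 0 (r n). \<forall>v\<in>cball 0 (r n). dist u v < d \<longrightarrow> dist (k0 a u) (k0 a v) < 1 / (real n + 1))"

lemma dl_ex: "\<exists>d. dlP n d"
proof -
  have "continuous_on (cball 0 (r n)) (k0 a)"
  proof (intro continuous_at_imp_continuous_on ballI k0_isCont)
    fix u :: complex assume "u \<in> cball 0 (r n)"
    then have "cmod u \<le> r n" by simp
    then show "Re u < 1" using abs_Re_le_cmod[of u] r_lt1[of n] by linarith
  qed
  then have "uniformly_continuous_on (cball 0 (r n)) (k0 a)"
    by (intro compact_uniformly_continuous) auto
  moreover have "0 < 1 / (real n + 1)" by simp
  ultimately obtain d where d: "0 < d" "\<forall>x\<in>cball 0 (r n). \<forall>x'\<in>cball 0 (r n). dist x' x < d \<longrightarrow> dist (k0 a x') (k0 a x) < 1 / (real n + 1)"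
    unfolding uniformly_continuous_on_def by metis
  have "dlP n (min d (1 / (real n + 1)))"
    unfolding dlP_def using d by auto
  then show ?thesis by blast
qed

definition dl :: "nat \<Rightarrow> real" where "dl n = (SOME d. dlP n d)"

lemma dl: "dlP n (dl n)"
  unfolding dl_def using dl_ex by (rule someI_ex)

lemma dl_pos: "0 < dl n" and dl_le: "dl n \<le> 1 / (real n + 1)"
  using dl[of n] by (auto simp: dlP_def)

lemma dl_uc: "u \<in> cball 0 (r n) \<Longrightarrow> v \<in> cball 0 (r n) \<Longrightarrow> dist u v < dl n \<Longrightarrow> dist (k0 a u) (k0 a v) < 1 / (real n + 1)"
  using dl[of n] by (auto simp: dlP_def)

definition cs :: "nat \<Rightarrow> (complex^'n) list" where
  "cs n = (SOME cs. set cs \<subseteq> E \<and> E \<subseteq> (\<Union>c\<in>set cs. ball c (dl n)))"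

lemma cs_prop: "set (cs n) \<subseteq> E \<and> E \<subseteq> (\<Union>c\<in>set (cs n). ball c (dl n))"
  unfolding cs_def using cover_list[OF cE dl_pos[of n]] by (rule someI_ex)

definition e0 :: "complex^'n" where "e0 = (SOME e. e \<in> E)"

lemma e0: "e0 \<in> E" unfolding e0_def using Ene by (simp add: some_in_eq)

definition s :: "nat \<Rightarrow> complex^'n \<Rightarrow> complex^'n" where "s n = sel (dl n) e0 (cs n)"
definition D :: "nat \<Rightarrow> (complex^'n) set" where "D n = insert e0 (set (cs n))"

lemma s_in: "s n x \<in> D n" unfolding s_def D_def by (rule sel_in)
lemma D_sub: "D n \<subseteq> E" using cs_prop[of n] e0 by (auto simp: D_def)
lemma D_fin: "finite (D n)" by (simp add: D_def)
lemma s_close: "x \<in> E \<Longrightarrow> dist (s n x) x < dl n"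
proof -
  assume "x \<in> E"
  then have "x \<in> (\<Union>c\<in>set (cs n). ball c (dl n))" using cs_prop[of n] by blast
  then show ?thesis unfolding s_def by (rule sel_close)
qed
lemma s_meas: "s n \<in> borel_measurable borel" unfolding s_def by (rule sel_meas)
lemma s_meas_mu: "s n \<in> borel_measurable \<mu>" unfolding meas_mu by (rule s_meas)
lemma s_norm: "norm (s n x) = 1" using s_in[of n x] D_sub[of n] E_norm by auto

definition w :: "nat \<Rightarrow> complex^'n \<Rightarrow> real" where "w n d = measure \<mu> (s n -` {d} \<inter> space \<mu>)"

abbreviation "kf \<equiv> kfun (ball 0 1) (kernelD a)"

definition y :: "nat \<Rightarrow> complex^'n \<Rightarrow> complex" where
  "y n = (\<lambda>z. \<Sum>d\<in>D n. of_real (w n d) * kf (r n *\<^sub>R d) z)"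

lemma rd_ball: "d \<in> E \<Longrightarrow> r n *\<^sub>R d \<in> ball 0 1"
  using E_norm[of d] r_pos[of n] r_lt1[of n] by simp

lemma kfD_in: "d \<in> D n \<Longrightarrow> kf (r n *\<^sub>R d) \<in> H"
  using D_sub rd_ball by (intro kfun_in) auto

lemma y_in: "y n \<in> H"
  unfolding y_def using D_fin kfD_in by (intro sum_in) auto


lemma kf_kf: "d \<in> E \<Longrightarrow> d' \<in> E \<Longrightarrow>
   ip (kf (r n *\<^sub>R d)) (kf (r m *\<^sub>R d')) = k0 a (of_real (r m * r n) * cinner d' d)"
proof -
  assume d: "d \<in> E" and d': "d' \<in> E"
  have "ip (kf (r n *\<^sub>R d)) (kf (r m *\<^sub>R d')) = kf (r n *\<^sub>R d) (r m *\<^sub>R d')"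
    using d d' rd_ball by (intro repro kfun_in) auto
  also have "\<dots> = kernelD a (r m *\<^sub>R d') (r n *\<^sub>R d)"
    using d' rd_ball by (simp add: kfun_def)
  also have "\<dots> = kk a (of_real (r m * r n) * cinner d' d)"
    by (simp add: kernelD_kk cinner_scaleR1 cinner_scaleR2 mult_ac)
  also have "\<dots> = k0 a (of_real (r m * r n) * cinner d' d)"
  proof -
    have "cmod (of_real (r m * r n) * cinner d' d) \<le> r m * r n * (norm d' * norm d)"
      using cinner_bound[of d' d] r_pos[of m] r_pos[of n]
      by (simp add: norm_mult abs_mult mult_left_mono)
    also have "\<dots> < 1"
    proof -
      have "r m * r n \<le> 1 * r n" using r_lt1[of m] r_pos[of n] by (intro mult_right_mono) auto
      then show ?thesis using E_norm[OF d] E_norm[OF d'] r_lt1[of n] by simp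
    qed
    finally show ?thesis using abs_Re_le_cmod by (intro k0_eq[symmetric]) (smt (verit))
  qed
  finally show ?thesis .
qed

lemma T_sum: "ip (y n) (y m) = (\<Sum>d\<in>D n. \<Sum>d'\<in>D m. of_real (w n d) * of_real (w m d') * k0 a (of_real (r m * r n) * cinner d' d))"
proof -
  have "ip (y n) (y m) = (\<Sum>d\<in>D n. of_real (w n d) * ip (kf (r n *\<^sub>R d)) (y m))"
    unfolding y_def[of n] using D_fin kfD_in y_in by (intro ip_sum1) auto
  also have "\<dots> = (\<Sum>d\<in>D n. of_real (w n d) * (\<Sum>d'\<in>D m. of_real (w m d') * ip (kf (r n *\<^sub>R d)) (kf (r m *\<^sub>R d'))))"
  proof (intro sum.cong refl arg_cong2[where f="(*)"])
    fix d assume "d \<in> D n"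
    have "ip (kf (r n *\<^sub>R d)) (y m) = (\<Sum>d'\<in>D m. cnj (of_real (w m d')) * ip (kf (r n *\<^sub>R d)) (kf (r m *\<^sub>R d')))"
      unfolding y_def[of m] using D_fin kfD_in \<open>d \<in> D n\<close> by (intro ip_sum2) auto
    then show "ip (kf (r n *\<^sub>R d)) (y m) = (\<Sum>d'\<in>D m. of_real (w m d') * ip (kf (r n *\<^sub>R d)) (kf (r m *\<^sub>R d')))"
      by simp
  qed
  also have "\<dots> = (\<Sum>d\<in>D n. \<Sum>d'\<in>D m. of_real (w n d) * of_real (w m d') * k0 a (of_real (r m * r n) * cinner d' d))"
  proof (intro sum.cong refl)
    fix d assume d: "d \<in> D n"
    have "of_real (w n d) * (\<Sum>d'\<in>D m. of_real (w m d') * ip (kf (r n *\<^sub>R d)) (kf (r m *\<^sub>R d')))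
       = (\<Sum>d'\<in>D m. of_real (w n d) * (of_real (w m d') * ip (kf (r n *\<^sub>R d)) (kf (r m *\<^sub>R d'))))"
      by (rule sum_distrib_left)
    also have "\<dots> = (\<Sum>d'\<in>D m. of_real (w n d) * of_real (w m d') * k0 a (of_real (r m * r n) * cinner d' d))"
    proof (intro sum.cong refl)
      fix d' assume d': "d' \<in> D m"
      have "ip (kf (r n *\<^sub>R d)) (kf (r m *\<^sub>R d')) = k0 a (of_real (r m * r n) * cinner d' d)"
        using D_sub d d' by (intro kf_kf) auto
      then show "of_real (w n d) * (of_real (w m d') * ip (kf (r n *\<^sub>R d)) (kf (r m *\<^sub>R d'))) =
          of_real (w n d) * of_real (w m d') * k0 a (of_real (r m * r n) * cinner d' d)"
        by (simp only: mult.assoc)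
    qed
    finally show "of_real (w n d) * (\<Sum>d'\<in>D m. of_real (w m d') * ip (kf (r n *\<^sub>R d)) (kf (r m *\<^sub>R d')))
       = (\<Sum>d'\<in>D m. of_real (w n d) * of_real (w m d') * k0 a (of_real (r m * r n) * cinner d' d))" .
  qed
  finally show ?thesis .
qed


lemma measure_times: "A \<in> sets borel \<Longrightarrow> B \<in> sets borel \<Longrightarrow> measure M2 (A \<times> B) = measure \<mu> A * measure \<mu> B"
  unfolding measure_def using M.emeasure_pair_measure_Times[of A \<mu> B] mu_sets by (simp add: enn2real_mult)

lemma fst_meas: "(fst :: ((complex^'n) \<times> (complex^'n)) \<Rightarrow> _) \<in> borel_measurable borel"
  by (intro borel_measurable_continuous_onI continuous_on_fst continuous_on_id)

lemma snd_meas: "(snd :: ((complex^'n) \<times> (complex^'n)) \<Rightarrow> _) \<in> borel_measurable borel"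
  by (intro borel_measurable_continuous_onI continuous_on_snd continuous_on_id)

definition SS :: "nat \<Rightarrow> nat \<Rightarrow> ((complex^'n) \<times> (complex^'n)) \<Rightarrow> ((complex^'n) \<times> (complex^'n))" where
  "SS m n p = (s m (fst p), s n (snd p))"

lemma SS_meas: "SS m n \<in> measurable M2 borel"
proof -
  have "(\<lambda>p::((complex^'n) \<times> (complex^'n)). s m (fst p)) \<in> borel_measurable borel" by (rule measurable_compose[OF fst_meas s_meas])
  moreover have "(\<lambda>p::((complex^'n) \<times> (complex^'n)). s n (snd p)) \<in> borel_measurable borel" by (rule measurable_compose[OF snd_meas s_meas])
  ultimately have "(\<lambda>p. (s m (fst p), s n (snd p))) \<in> measurable borel ((borel :: (complex^'n) measure) \<Otimes>\<^sub>M (borel :: (complex^'n) measure))"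
    by (rule measurable_Pair)
  then show ?thesis unfolding meas_M2 SS_def Binary_Product_Measure.borel_prod .
qed

lemma SS_pre: "SS m n -` {(d', d)} \<inter> space M2 = (s m -` {d'}) \<times> (s n -` {d})"
  by (auto simp: SS_def space_M2)

lemma T_int:
  fixes m n :: nat
  defines "g \<equiv> (\<lambda>q. k0 a (of_real (r m * r n) * cinner (fst q) (snd q)))"
  shows "integrable M2 (\<lambda>p. g (SS m n p))"
    and "ip (y n) (y m) = (LINT p|M2. g (SS m n p))"
proof -
  have sD: "SS m n p \<in> D m \<times> D n" for p by (simp add: SS_def s_in)
  have sing: "{q} \<in> sets borel" for q :: "(complex^'n) \<times> (complex^'n)" by simp
  show "integrable M2 (\<lambda>p. g (SS m n p))"
    by (rule integral_finite_range(1)[OF fin_M2 _ SS_meas sD sing]) (simp add: D_fin)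
  have "(LINT p|M2. g (SS m n p)) = (\<Sum>q\<in>D m \<times> D n. of_real (measure M2 (SS m n -` {q} \<inter> space M2)) * g q)"
    by (rule integral_finite_range(2)[OF fin_M2 _ SS_meas sD sing]) (simp add: D_fin)
  also have "\<dots> = (\<Sum>(d', d)\<in>D m \<times> D n. of_real (w m d' * w n d) * g (d', d))"
  proof (intro sum.cong refl, clarify)
    fix d' d
    have "s m -` {d'} \<in> sets borel" using s_meas by (rule measurable_sets_borel) simp
    moreover have "s n -` {d} \<in> sets borel" using s_meas by (rule measurable_sets_borel) simp
    ultimately have "measure M2 (SS m n -` {(d', d)} \<inter> space M2) = w m d' * w n d"
      unfolding SS_pre w_def space_mu by (simp add: measure_times)
    then show "of_real (measure M2 (SS m n -` {(d', d)} \<inter> space M2)) * g (d', d) = of_real (w m d' * w n d) * g (d', d)"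
      by simp
  qed
  also have "\<dots> = (\<Sum>d'\<in>D m. \<Sum>d\<in>D n. of_real (w m d' * w n d) * g (d', d))"
    by (rule sum.cartesian_product[symmetric])
  also have "\<dots> = (\<Sum>d\<in>D n. \<Sum>d'\<in>D m. of_real (w m d' * w n d) * g (d', d))"
    by (rule sum.swap)
  also have "\<dots> = ip (y n) (y m)"
    unfolding T_sum g_def by (intro sum.cong refl) (simp add: mult_ac)
  finally show "ip (y n) (y m) = (LINT p|M2. g (SS m n p))" by simp
qed


lemma ci_small: "norm u \<le> 1 \<Longrightarrow> norm v \<le> 1 \<Longrightarrow> 0 \<le> \<rho> \<Longrightarrow> cmod (of_real \<rho> * cinner u v) \<le> \<rho>"
proof -
  assume a: "norm u \<le> 1" "norm v \<le> 1" "0 \<le> \<rho>"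
  have "cmod (of_real \<rho> * cinner u v) = \<rho> * cmod (cinner u v)" using a by (simp add: norm_mult)
  also have "\<dots> \<le> \<rho> * (norm u * norm v)" using a cinner_bound by (intro mult_left_mono) auto
  also have "\<dots> \<le> \<rho> * 1" using a by (intro mult_left_mono mult_le_one) auto
  finally show ?thesis by simp
qed

lemma ci_diff1: "norm v \<le> 1 \<Longrightarrow> 0 \<le> \<rho> \<Longrightarrow> \<rho> \<le> 1 \<Longrightarrow>
   dist (of_real \<rho> * cinner u v) (of_real \<rho> * cinner u' v) \<le> norm (u - u')"
proof -
  assume a: "norm v \<le> 1" "0 \<le> \<rho>" "\<rho> \<le> 1"
  have "dist (of_real \<rho> * cinner u v) (of_real \<rho> * cinner u' v) = \<rho> * cmod (cinner (u - u') v)"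
    using a by (simp add: dist_norm cinner_diff1[symmetric] right_diff_distrib[symmetric] norm_mult)
  also have "\<dots> \<le> 1 * (norm (u - u') * norm v)" using a cinner_bound by (intro mult_mono) auto
  also have "\<dots> \<le> norm (u - u')" using a by (simp add: mult_left_le)
  finally show ?thesis .
qed

lemma ci_diff2: "norm u \<le> 1 \<Longrightarrow> 0 \<le> \<rho> \<Longrightarrow> \<rho> \<le> 1 \<Longrightarrow>
   dist (of_real \<rho> * cinner u v) (of_real \<rho> * cinner u v') \<le> norm (v - v')"
proof -
  assume a: "norm u \<le> 1" "0 \<le> \<rho>" "\<rho> \<le> 1"
  have "dist (of_real \<rho> * cinner u v) (of_real \<rho> * cinner u v') = \<rho> * cmod (cinner u (v - v'))"
    using a by (simp add: dist_norm cinner_diff2[symmetric] right_diff_distrib[symmetric] norm_mult)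
  also have "\<dots> \<le> 1 * (norm u * norm (v - v'))" using a cinner_bound by (intro mult_mono) auto
  also have "\<dots> \<le> norm (v - v')"
  proof -
    have "norm u * norm (v - v') \<le> 1 * norm (v - v')" using a by (intro mult_right_mono) auto
    then show ?thesis by simp
  qed
  finally show ?thesis .
qed

definition J :: "real \<Rightarrow> complex" where "J \<rho> = (LINT p|M2. k0 a (of_real \<rho> * ci p))"
definition L :: complex where "L = (LINT p|M2. k0 a (ci p))"

lemma dom_bound: "AE p in M2. \<forall>\<rho>. 0 \<le> \<rho> \<and> \<rho> \<le> 1 \<longrightarrow> cmod (k0 a (of_real \<rho> * ci p)) \<le> 2 * cmod (k0 a (ci p)) + 8"
  using AE_E2 AE_ne1
proof eventually_elim
  fix p assume p: "fst p \<in> E \<and> snd p \<in> E" "ci p \<noteq> 1"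
  have t1: "cmod (ci p) \<le> 1" using ci_small[of "fst p" "snd p" 1] p E_norm by (simp add: ci_def)
  have rt: "Re (ci p) < 1" using Re_lt1[OF t1 p(2)] .
  show "\<forall>\<rho>. 0 \<le> \<rho> \<and> \<rho> \<le> 1 \<longrightarrow> cmod (k0 a (of_real \<rho> * ci p)) \<le> 2 * cmod (k0 a (ci p)) + 8"
  proof (intro allI impI, elim conjE)
    fix \<rho> :: real assume r: "0 \<le> \<rho>" "\<rho> \<le> 1"
    have "Re (of_real \<rho> * ci p) < 1"
    proof (cases "Re (ci p) \<le> 0")
      case True
      have "\<rho> * Re (ci p) \<le> 0" by (rule mult_nonneg_nonpos[OF r(1) True])
      then show ?thesis by simp
    next
      case False
      then have "\<rho> * Re (ci p) \<le> 1 * Re (ci p)" using r by (intro mult_right_mono) auto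
      then show ?thesis using rt by simp
    qed
    then show "cmod (k0 a (of_real \<rho> * ci p)) \<le> 2 * cmod (k0 a (ci p)) + 8"
      using kk_bound[OF a0 a1 t1 p(2) r] rt by (simp add: k0_eq)
  qed
qed

lemma W_int: "integrable M2 (\<lambda>p. 2 * cmod (k0 a (ci p)) + 8)"
proof -
  interpret F: finite_measure M2 by (rule fin_M2)
  show ?thesis using L_int by (intro Bochner_Integration.integrable_add integrable_mult_right integrable_norm) auto
qed

lemma J_int: "0 \<le> \<rho> \<Longrightarrow> \<rho> \<le> 1 \<Longrightarrow> integrable M2 (\<lambda>p. k0 a (of_real \<rho> * ci p))"
proof -
  assume r: "0 \<le> \<rho>" "\<rho> \<le> 1"
  show ?thesis
  proof (rule Bochner_Integration.integrable_bound[OF W_int k0ci_meas2])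
    show "AE p in M2. norm (k0 a (of_real \<rho> * ci p)) \<le> norm (2 * cmod (k0 a (ci p)) + 8)"
      using dom_bound by eventually_elim (use r in auto)
  qed
qed


lemma r_le1: "r n \<le> 1" using r_lt1[of n] by simp

lemma rho_le: "r m * r n \<le> r m" "r m * r n \<le> r n" "0 \<le> r m * r n" "r m * r n \<le> 1"
proof -
  show "r m * r n \<le> r m" using r_pos[of m] r_le1[of n] by (simp add: mult_left_le)
  show "r m * r n \<le> r n" using r_pos[of n] r_le1[of m] by (simp add: mult_left_le_one_le)
  show "0 \<le> r m * r n" using r_pos[of m] r_pos[of n] by simp
  then show "r m * r n \<le> 1" using \<open>r m * r n \<le> r m\<close> r_le1[of m] by simp
qed

lemma pt_bound:
  assumes z: "z \<in> E" and w': "w' \<in> E"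
  shows "cmod (k0 a (of_real (r m * r n) * cinner (s m z) (s n w')) - k0 a (of_real (r m * r n) * cinner z w'))
     \<le> 1 / (real m + 1) + 1 / (real n + 1)"
proof -
  define \<rho> where "\<rho> = r m * r n"
  have \<rho>: "\<rho> \<le> r m" "\<rho> \<le> r n" "0 \<le> \<rho>" "\<rho> \<le> 1" unfolding \<rho>_def using rho_le by auto
  define u1 where "u1 = of_real \<rho> * cinner (s m z) (s n w')"
  define u2 where "u2 = of_real \<rho> * cinner z (s n w')"
  define u3 where "u3 = of_real \<rho> * cinner z w'"
  have nz: "norm z = 1" "norm w' = 1" using E_norm z w' by auto
  have c1: "cmod u1 \<le> \<rho>" unfolding u1_def using s_norm \<rho> by (intro ci_small) auto
  have c2: "cmod u2 \<le> \<rho>" unfolding u2_def using s_norm \<rho> nz by (intro ci_small) auto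
  have c3: "cmod u3 \<le> \<rho>" unfolding u3_def using \<rho> nz by (intro ci_small) auto
  have "dist u1 u2 \<le> norm (s m z - z)" unfolding u1_def u2_def using s_norm \<rho> by (intro ci_diff1) auto
  also have "\<dots> < dl m" using s_close[OF z, of m] by (simp add: dist_norm)
  finally have d12: "dist u1 u2 < dl m" .
  have e12: "dist (k0 a u1) (k0 a u2) < 1 / (real m + 1)"
    using c1 c2 \<rho> d12 by (intro dl_uc) auto
  have "dist u2 u3 \<le> norm (s n w' - w')" unfolding u2_def u3_def using nz \<rho> by (intro ci_diff2) auto
  also have "\<dots> < dl n" using s_close[OF w', of n] by (simp add: dist_norm)
  finally have d23: "dist u2 u3 < dl n" .
  have e23: "dist (k0 a u2) (k0 a u3) < 1 / (real n + 1)"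
    using c2 c3 \<rho> d23 by (intro dl_uc) auto
  note e12 e23
  moreover have "dist (k0 a u1) (k0 a u3) \<le> dist (k0 a u1) (k0 a u2) + dist (k0 a u2) (k0 a u3)"
    by (rule dist_triangle)
  ultimately have "dist (k0 a u1) (k0 a u3) \<le> 1 / (real m + 1) + 1 / (real n + 1)" by linarith
  then show ?thesis unfolding u1_def u3_def \<rho>_def by (simp add: dist_norm)
qed

lemma T_int':
  "integrable M2 (\<lambda>p. k0 a (of_real (r m * r n) * cinner (s m (fst p)) (s n (snd p))))"
  "ip (y n) (y m) = (LINT p|M2. k0 a (of_real (r m * r n) * cinner (s m (fst p)) (s n (snd p))))"
  using T_int[where m=m and n=n] by (simp_all add: SS_def)

lemma disc_err: "cmod (ip (y n) (y m) - J (r m * r n)) \<le> (1 / (real m + 1) + 1 / (real n + 1)) * measure M2 (space M2)"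
proof -
  interpret F: finite_measure M2 by (rule fin_M2)
  define f where "f p = k0 a (of_real (r m * r n) * cinner (s m (fst p)) (s n (snd p)))" for p
  define h where "h p = k0 a (of_real (r m * r n) * ci p)" for p :: "(complex^'n) \<times> (complex^'n)"
  define C where "C = 1 / (real m + 1) + 1 / (real n + 1)"
  have fi: "integrable M2 f" unfolding f_def by (rule T_int'(1))
  have hi: "integrable M2 h" unfolding h_def using rho_le by (intro J_int) auto
  have i1: "ip (y n) (y m) = (LINT p|M2. f p)" unfolding f_def by (rule T_int'(2))
  have i2: "J (r m * r n) = (LINT p|M2. h p)" unfolding h_def J_def ..
  have "ip (y n) (y m) - J (r m * r n) = (LINT p|M2. f p - h p)"
    unfolding i1 i2 by (rule Bochner_Integration.integral_diff[OF fi hi, symmetric])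
  also have "cmod \<dots> \<le> (LINT p|M2. cmod (f p - h p))" by (rule integral_norm_bound)
  also have "\<dots> \<le> (LINT p|M2. C)"
  proof (rule integral_mono_AE)
    show "integrable M2 (\<lambda>p. cmod (f p - h p))" using fi hi by auto
    show "integrable M2 (\<lambda>p. C)" by simp
    show "AE p in M2. cmod (f p - h p) \<le> C"
      using AE_E2
    proof eventually_elim
      fix p assume "fst p \<in> E \<and> snd p \<in> E"
      then show "cmod (f p - h p) \<le> C" unfolding f_def h_def C_def ci_def
        by (intro pt_bound) auto
    qed
  qed
  also have "\<dots> = C * measure M2 (space M2)" by simp
  finally show ?thesis unfolding C_def .
qed


lemma J_tends: "((\<lambda>t. J (1 - inverse t)) \<longlongrightarrow> L) at_top"
  unfolding J_def L_def
proof (rule integral_dominated_convergence_at_top[where w = "\<lambda>p. 2 * cmod (k0 a (ci p)) + 8"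
      and s = "\<lambda>t p. k0 a (of_real (1 - inverse t) * ci p)"])
  show "(\<lambda>p. k0 a (ci p)) \<in> borel_measurable M2" using k0ci_meas2[of 1] by simp
  show "\<And>t. (\<lambda>p. k0 a (of_real (1 - inverse t) * ci p)) \<in> borel_measurable M2" by (rule k0ci_meas2)
  show "integrable M2 (\<lambda>p. 2 * cmod (k0 a (ci p)) + 8)" by (rule W_int)
  have lim1: "((\<lambda>t::real. 1 - inverse t) \<longlongrightarrow> 1) at_top"
    using tendsto_diff[OF tendsto_const[of 1] tendsto_inverse_0_at_top[OF filterlim_ident]] by simp
  show "AE p in M2. ((\<lambda>t. k0 a (of_real (1 - inverse t) * ci p)) \<longlongrightarrow> k0 a (ci p)) at_top"
    using AE_E2 AE_ne1
  proof eventually_elim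
    fix p assume p: "fst p \<in> E \<and> snd p \<in> E" "ci p \<noteq> 1"
    have t1: "cmod (ci p) \<le> 1" using ci_small[of "fst p" "snd p" 1] p E_norm by (simp add: ci_def)
    have rt: "Re (ci p) < 1" using Re_lt1[OF t1 p(2)] .
    have "((\<lambda>t. of_real (1 - inverse t) * ci p) \<longlongrightarrow> of_real 1 * ci p) at_top"
      by (intro tendsto_mult tendsto_of_real lim1 tendsto_const)
    then have "((\<lambda>t. of_real (1 - inverse t) * ci p) \<longlongrightarrow> ci p) at_top" by simp
    then show "((\<lambda>t. k0 a (of_real (1 - inverse t) * ci p)) \<longlongrightarrow> k0 a (ci p)) at_top"
      by (rule isCont_tendsto_compose[OF k0_isCont[OF rt]])
  qed
  show "\<forall>\<^sub>F t in at_top. AE p in M2. norm (k0 a (of_real (1 - inverse t) * ci p)) \<le> 2 * cmod (k0 a (ci p)) + 8"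
  proof (rule eventually_at_top_linorderI[of 1])
    fix t :: real assume t: "1 \<le> t"
    have i1: "0 \<le> 1 - inverse t" "1 - inverse t \<le> 1" using t by (auto simp: field_simps)
    show "AE p in M2. norm (k0 a (of_real (1 - inverse t) * ci p)) \<le> 2 * cmod (k0 a (ci p)) + 8"
      using dom_bound
    proof eventually_elim
      fix p assume "\<forall>\<rho>. 0 \<le> \<rho> \<and> \<rho> \<le> 1 \<longrightarrow> cmod (k0 a (of_real \<rho> * ci p)) \<le> 2 * cmod (k0 a (ci p)) + 8"
      then show "norm (k0 a (of_real (1 - inverse t) * ci p)) \<le> 2 * cmod (k0 a (ci p)) + 8"
        using i1 by blast
    qed
  qed
qed

lemma J_lim: "e > 0 \<Longrightarrow> \<exists>N. \<forall>n m. N \<le> n \<longrightarrow> N \<le> m \<longrightarrow> cmod (J (r m * r n) - L) < e"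
proof -
  assume e: "e > 0"
  have "\<forall>\<^sub>F t in at_top. dist (J (1 - inverse t)) L < e" using tendstoD[OF J_tends e] .
  then obtain T where T: "\<And>t. T \<le> t \<Longrightarrow> dist (J (1 - inverse t)) L < e"
    by (auto simp: eventually_at_top_linorder)
  define T' where "T' = max T 1"
  define N where "N = nat \<lceil>2 * T'\<rceil>"
  have T'1: "1 \<le> T'" unfolding T'_def by simp
  have N2: "2 * T' \<le> real N + 2" unfolding N_def by linarith
  show ?thesis
  proof (intro exI allI impI)
    fix n m assume nm: "N \<le> n" "N \<le> m"
    define q where "q = 1 - 1 / (real N + 2)"
    have q0: "0 \<le> q" unfolding q_def by (simp add: field_simps)
    have qm: "q \<le> r m" and qn: "q \<le> r n" unfolding q_def using r_ge nm by auto
    define \<rho> where "\<rho> = r m * r n"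
    have "q * q \<le> \<rho>" unfolding \<rho>_def using qm qn q0 by (intro mult_mono) auto
    moreover have "1 - 2 / (real N + 2) \<le> q * q"
    proof -
      define x where "x = 1 / (real N + 2)"
      have "q * q = 1 - 2 * x + x * x" unfolding q_def x_def[symmetric] by (simp add: algebra_simps)
      moreover have "0 \<le> x * x" by simp
      moreover have "2 / (real N + 2) = 2 * x" unfolding x_def by simp
      ultimately show ?thesis by linarith
    qed
    moreover have "2 / (real N + 2) \<le> 1 / T'"
      using N2 T'1 by (simp add: field_simps)
    ultimately have "1 - \<rho> \<le> 1 / T'" by linarith
    moreover have "0 < 1 - \<rho>" unfolding \<rho>_def using rho_le(1)[of m n] r_lt1[of m] by linarith
    ultimately have tT: "T' \<le> inverse (1 - \<rho>)" using T'1
      by (simp add: field_simps)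
    have "T \<le> inverse (1 - \<rho>)" using tT unfolding T'_def by linarith
    then have "dist (J (1 - inverse (inverse (1 - \<rho>)))) L < e" by (rule T)
    then show "cmod (J (r m * r n) - L) < e" unfolding \<rho>_def by (simp add: dist_norm)
  qed
qed


lemma tri4: "cmod (a1 - a2 - a3 + a4) \<le> cmod a1 + cmod a2 + cmod a3 + cmod a4"
proof -
  have "cmod (a1 - a2 - a3 + a4) \<le> cmod (a1 - a2 - a3) + cmod a4" by (rule norm_triangle_ineq)
  moreover have "cmod (a1 - a2 - a3) \<le> cmod (a1 - a2) + cmod a3" by (rule norm_triangle_ineq4)
  moreover have "cmod (a1 - a2) \<le> cmod a1 + cmod a2" by (rule norm_triangle_ineq4)
  ultimately show ?thesis by linarith
qed

lemma T_lim: "e > 0 \<Longrightarrow> \<exists>N. \<forall>n m. N \<le> n \<longrightarrow> N \<le> m \<longrightarrow> cmod (ip (y n) (y m) - L) < e"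
proof -
  assume e: "e > 0"
  define C where "C = measure M2 (space M2)"
  have C0: "0 \<le> C" unfolding C_def by simp
  obtain N1 where N1: "\<And>n m. N1 \<le> n \<Longrightarrow> N1 \<le> m \<Longrightarrow> cmod (J (r m * r n) - L) < e / 2"
    using J_lim[of "e / 2"] e by auto
  define N2 where "N2 = nat \<lceil>4 * C / e\<rceil>"
  have N2: "4 * C / e \<le> real N2" unfolding N2_def by linarith
  show ?thesis
  proof (intro exI allI impI)
    fix n m assume nm: "max N1 N2 \<le> n" "max N1 N2 \<le> m"
    have "1 / (real m + 1) \<le> 1 / (real N2 + 1)" using nm by (intro divide_left_mono) auto
    moreover have "1 / (real n + 1) \<le> 1 / (real N2 + 1)" using nm by (intro divide_left_mono) auto
    ultimately have "(1 / (real m + 1) + 1 / (real n + 1)) * C \<le> (2 / (real N2 + 1)) * C"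
      using C0 by (intro mult_right_mono) auto
    also have "\<dots> < e / 2"
    proof -
      have "4 * C < e * (real N2 + 1)" using N2 e by (simp add: field_simps)
      then show ?thesis using e by (simp add: field_simps)
    qed
    finally have a1: "cmod (ip (y n) (y m) - J (r m * r n)) < e / 2"
      using disc_err[of n m] unfolding C_def by linarith
    have a2: "cmod (J (r m * r n) - L) < e / 2" using nm by (intro N1) auto
    have "cmod (ip (y n) (y m) - L) \<le> cmod (ip (y n) (y m) - J (r m * r n)) + cmod (J (r m * r n) - L)"
      using dist_triangle[of "ip (y n) (y m)" L "J (r m * r n)"] by (simp add: dist_norm)
    then show "cmod (ip (y n) (y m) - L) < e" using a1 a2 by linarith
  qed
qed

lemma cauchy: "e > 0 \<Longrightarrow> \<exists>N. \<forall>n m. N \<le> n \<longrightarrow> N \<le> m \<longrightarrow> hnorm ip (\<lambda>z. y n z - y m z) < e"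
proof -
  assume e: "e > 0"
  obtain N where N: "\<And>n m. N \<le> n \<Longrightarrow> N \<le> m \<Longrightarrow> cmod (ip (y n) (y m) - L) < e^2 / 4"
    using T_lim[of "e^2 / 4"] e by auto
  show ?thesis
  proof (intro exI allI impI)
    fix n m assume nm: "N \<le> n" "N \<le> m"
    have yd: "(\<lambda>z. y n z - y m z) \<in> H" using y_in by (intro diff_in)
    have "ip (\<lambda>z. y n z - y m z) (\<lambda>z. y n z - y m z)
        = (ip (y n) (y n) - L) - (ip (y n) (y m) - L) - (ip (y m) (y n) - L) + (ip (y m) (y m) - L)"
      using y_in yd by (simp add: ip_diff1 ip_diff2)
    also have "cmod \<dots> < e^2"
    proof -
      have "cmod ((ip (y n) (y n) - L) - (ip (y n) (y m) - L) - (ip (y m) (y n) - L) + (ip (y m) (y m) - L))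
          \<le> cmod (ip (y n) (y n) - L) + cmod (ip (y n) (y m) - L) + cmod (ip (y m) (y n) - L) + cmod (ip (y m) (y m) - L)"
        by (rule tri4)
      also have "\<dots> < e^2 / 4 + e^2 / 4 + e^2 / 4 + e^2 / 4"
        using nm by (intro add_strict_mono N) auto
      finally show ?thesis by simp
    qed
    finally have "Re (ip (\<lambda>z. y n z - y m z) (\<lambda>z. y n z - y m z)) < e^2"
      using abs_Re_le_cmod by (smt (verit))
    then have "sqrt (Re (ip (\<lambda>z. y n z - y m z) (\<lambda>z. y n z - y m z))) < sqrt (e^2)"
      by (intro real_sqrt_less_mono)
    then show "hnorm ip (\<lambda>z. y n z - y m z) < e" using e by (simp add: hnorm_def)
  qed
qed


definition Nk :: "nat \<Rightarrow> nat" where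
  "Nk k = (SOME N. \<forall>n m. N \<le> n \<longrightarrow> N \<le> m \<longrightarrow> hnorm ip (\<lambda>z. y n z - y m z) < (1/2)^k)"

lemma Nk: "Nk k \<le> n \<Longrightarrow> Nk k \<le> m \<Longrightarrow> hnorm ip (\<lambda>z. y n z - y m z) < (1/2)^k"
proof -
  assume nm: "Nk k \<le> n" "Nk k \<le> m"
  have "\<exists>N. \<forall>n m. N \<le> n \<longrightarrow> N \<le> m \<longrightarrow> hnorm ip (\<lambda>z. y n z - y m z) < (1/2)^k"
    by (intro cauchy) simp
  then have "\<forall>n m. Nk k \<le> n \<longrightarrow> Nk k \<le> m \<longrightarrow> hnorm ip (\<lambda>z. y n z - y m z) < (1/2)^k"
    unfolding Nk_def by (rule someI_ex)
  then show ?thesis using nm by blast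
qed

definition ns :: "nat \<Rightarrow> nat" where "ns k = k + (\<Sum>j\<le>k. Nk j)"

lemma ns_ge: "Nk k \<le> ns k"
proof -
  have "Nk k \<le> (\<Sum>j\<le>k. Nk j)" by (rule member_le_sum) auto
  then show ?thesis unfolding ns_def by simp
qed

lemma ns_Suc: "ns k \<le> ns (Suc k)" unfolding ns_def by simp

lemma ns_mono: "strict_mono ns"
  unfolding strict_mono_Suc_iff ns_def by simp

definition Y :: "nat \<Rightarrow> complex^'n \<Rightarrow> complex" where "Y k = y (ns k)"

definition Dl :: "nat \<Rightarrow> complex^'n \<Rightarrow> complex" where
  "Dl k = (if k = 0 then Y 0 else (\<lambda>z. Y k z - Y (k - 1) z))"

lemma Y_in: "Y k \<in> H" unfolding Y_def by (rule y_in)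

lemma Dl_in: "Dl k \<in> H" unfolding Dl_def using Y_in by (auto intro: diff_in)

lemma Dl_small: "hnorm ip (Dl (Suc k)) < (1/2)^k"
proof -
  have "Nk k \<le> ns (Suc k)" using ns_ge[of k] ns_Suc[of k] by linarith
  then show ?thesis unfolding Dl_def Y_def using ns_ge[of k] by (simp add: Nk)
qed

lemma hnorm_nonneg: "f \<in> H \<Longrightarrow> 0 \<le> hnorm ip f" unfolding hnorm_def using pos by simp

lemma Dl_summable: "summable (\<lambda>k. hnorm ip (Dl k))"
proof -
  have "summable (\<lambda>k. hnorm ip (Dl (Suc k)))"
  proof (rule summable_comparison_test[OF _ summable_geometric[of "1/2::real"]])
    show "\<exists>N. \<forall>n\<ge>N. norm (hnorm ip (Dl (Suc n))) \<le> (1/2)^n"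
      using Dl_small hnorm_nonneg[OF Dl_in] by (intro exI[of _ 0]) (auto simp: less_imp_le)
  qed simp
  then show ?thesis using summable_Suc_iff[of "\<lambda>k. hnorm ip (Dl k)"] by blast
qed

lemma tele: "\<phi> \<in> H \<Longrightarrow> (\<Sum>k<Suc K. ip \<phi> (Dl k)) = ip \<phi> (Y K)"
proof (induction K)
  case 0 then show ?case by (simp add: Dl_def)
next
  case (Suc K)
  have "(\<Sum>k<Suc (Suc K). ip \<phi> (Dl k)) = ip \<phi> (Y K) + ip \<phi> (Dl (Suc K))"
    using Suc by simp
  also have "ip \<phi> (Dl (Suc K)) = ip \<phi> (Y (Suc K)) - ip \<phi> (Y K)"
    unfolding Dl_def using Y_in Suc.prems by (simp add: ip_diff2)
  finally show ?case by simp
qed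

lemma ipDl_summable: "\<phi> \<in> H \<Longrightarrow> summable (\<lambda>k. ip \<phi> (Dl k))"
proof -
  assume p: "\<phi> \<in> H"
  have "summable (\<lambda>k. hnorm ip \<phi> * hnorm ip (Dl k))"
    using Dl_summable by (rule summable_mult)
  then have "summable (\<lambda>k. norm (ip \<phi> (Dl k)))"
    by (rule summable_comparison_test[rotated]) (use p Dl_in cauchy_schwarz in auto)
  then show ?thesis by (rule summable_norm_cancel)
qed

lemma ipDl_sums: "\<phi> \<in> H \<Longrightarrow> (\<lambda>K. ip \<phi> (Y K)) \<longlonglongrightarrow> l \<Longrightarrow> (\<lambda>k. ip \<phi> (Dl k)) sums l"
proof -
  assume p: "\<phi> \<in> H" and lim: "(\<lambda>K. ip \<phi> (Y K)) \<longlonglongrightarrow> l"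
  have e: "(\<lambda>K. \<Sum>k<Suc K. ip \<phi> (Dl k)) = (\<lambda>K. ip \<phi> (Y K))" by (rule ext, rule tele[OF p])
  have "(\<lambda>K. \<Sum>k<Suc K. ip \<phi> (Dl k)) \<longlonglongrightarrow> l" unfolding e by (rule lim)
  then show ?thesis unfolding sums_def by (rule LIMSEQ_imp_Suc)
qed


lemma ip_poly_y:
  assumes "restrict0 (ball 0 1) p \<in> H"
  shows "ip (restrict0 (ball 0 1) p) (y n) = (LINT x|\<mu>. p (r n *\<^sub>R s n x))"
proof -
  have "ip (restrict0 (ball 0 1) p) (y n) = (\<Sum>d\<in>D n. cnj (of_real (w n d)) * ip (restrict0 (ball 0 1) p) (kf (r n *\<^sub>R d)))"
    unfolding y_def using D_fin kfD_in assms by (intro ip_sum2) auto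
  also have "\<dots> = (\<Sum>d\<in>D n. of_real (w n d) * p (r n *\<^sub>R d))"
  proof (intro sum.cong refl)
    fix d assume "d \<in> D n"
    then have "r n *\<^sub>R d \<in> ball 0 1" using D_sub rd_ball by auto
    then show "cnj (of_real (w n d)) * ip (restrict0 (ball 0 1) p) (kf (r n *\<^sub>R d)) = of_real (w n d) * p (r n *\<^sub>R d)"
      using assms by (simp add: repro restrict0_def)
  qed
  also have "\<dots> = (LINT x|\<mu>. p (r n *\<^sub>R s n x))"
    using integral_finite_range(2)[OF mu_fin D_fin s_meas_mu s_in, where g="\<lambda>d. p (r n *\<^sub>R d)"]
    by (simp add: w_def)
  finally show ?thesis .
qed

lemma r_lim: "r \<longlonglongrightarrow> 1"
proof -
  have "(\<lambda>n. 1 / (real n + 2)) \<longlonglongrightarrow> 0"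
  proof (rule Lim_null_comparison[OF _ LIMSEQ_inverse_real_of_nat])
    show "\<forall>\<^sub>F n in sequentially. norm (1 / (real n + 2)) \<le> inverse (real (Suc n))"
      by (intro always_eventually allI) (simp add: field_simps)
  qed
  from tendsto_diff[OF tendsto_const[of 1] this] show ?thesis unfolding r_def[abs_def] by simp
qed

lemma s_lim: "x \<in> E \<Longrightarrow> (\<lambda>n. s n x) \<longlonglongrightarrow> x"
proof -
  assume x: "x \<in> E"
  have "(\<lambda>n. s n x - x) \<longlonglongrightarrow> 0"
  proof (rule Lim_null_comparison[OF _ LIMSEQ_inverse_real_of_nat])
    show "\<forall>\<^sub>F n in sequentially. norm (s n x - x) \<le> inverse (real (Suc n))"
    proof (intro always_eventually allI)
      fix n
      have "norm (s n x - x) < dl n" using s_close[OF x] by (simp add: dist_norm)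
      also have "\<dots> \<le> 1 / (real n + 1)" by (rule dl_le)
      finally show "norm (s n x - x) \<le> inverse (real (Suc n))" by (simp add: field_simps)
    qed
  qed
  then show ?thesis by (rule LIM_zero_cancel)
qed

lemma poly_lim: "is_poly p \<Longrightarrow> (\<lambda>n. LINT x|\<mu>. p (r n *\<^sub>R s n x)) \<longlonglongrightarrow> (LINT x|\<mu>. p x)"
proof -
  assume p: "is_poly p"
  have pc: "continuous_on UNIV p" using poly_cont[OF p] .
  have "compact (p ` cball 0 1)"
    using pc by (intro compact_continuous_image) (auto intro: continuous_on_subset)
  then obtain B where B: "\<forall>u\<in>cball 0 1. norm (p u) \<le> B"
    using compact_imp_bounded[of "p ` cball 0 1"] unfolding bounded_iff by auto
  have pm: "p \<in> borel_measurable borel" using pc by (rule borel_measurable_continuous_onI)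
  show ?thesis
  proof (rule integral_dominated_convergence[where w = "\<lambda>_. B"])
    show "p \<in> borel_measurable \<mu>" unfolding meas_mu by (rule pm)
    show "\<And>n. (\<lambda>x. p (r n *\<^sub>R s n x)) \<in> borel_measurable \<mu>"
    proof -
      fix n
      have "(\<lambda>x. r n *\<^sub>R s n x) \<in> borel_measurable borel" using s_meas[of n] by measurable
      then show "(\<lambda>x. p (r n *\<^sub>R s n x)) \<in> borel_measurable \<mu>" unfolding meas_mu
        using pm by (rule measurable_compose)
    qed
    show "integrable \<mu> (\<lambda>_. B)" by simp
    show "AE x in \<mu>. (\<lambda>n. p (r n *\<^sub>R s n x)) \<longlonglongrightarrow> p x"
      using AE_E
    proof eventually_elim
      fix x assume x: "x \<in> E"
      have "(\<lambda>n. r n *\<^sub>R s n x) \<longlonglongrightarrow> 1 *\<^sub>R x" by (intro tendsto_scaleR r_lim s_lim x)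
      then show "(\<lambda>n. p (r n *\<^sub>R s n x)) \<longlonglongrightarrow> p x"
        using pc by (intro isCont_tendsto_compose[of x p]) (auto simp: continuous_on_eq_continuous_at)
    qed
    show "\<And>n. AE x in \<mu>. norm (p (r n *\<^sub>R s n x)) \<le> B"
    proof (intro AE_I2)
      fix n x
      have "r n *\<^sub>R s n x \<in> cball 0 1" using s_norm[of n x] r_pos[of n] r_le1[of n] by simp
      then show "norm (p (r n *\<^sub>R s n x)) \<le> B" using B by blast
    qed
  qed
qed

lemma poly_lim_Y: "is_poly p \<Longrightarrow> restrict0 (ball 0 1) p \<in> H \<Longrightarrow>
    (\<lambda>k. ip (restrict0 (ball 0 1) p) (Y k)) \<longlonglongrightarrow> (LINT x|\<mu>. p x)"
proof -
  assume p: "is_poly p" and h: "restrict0 (ball 0 1) p \<in> H"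
  have "(\<lambda>n. ip (restrict0 (ball 0 1) p) (y n)) \<longlonglongrightarrow> (LINT x|\<mu>. p x)"
    using poly_lim[OF p] by (simp add: ip_poly_y[OF h])
  from LIMSEQ_subseq_LIMSEQ[OF this ns_mono] show ?thesis by (simp add: Y_def o_def)
qed


abbreviation "BB \<equiv> ball (0::complex^'n) 1"

lemma x0_in: "kf 0 \<in> H" by (intro kfun_in) simp

lemma x0_val: "z \<in> BB \<Longrightarrow> kf 0 z = 1"
  by (simp add: kfun_def kernelD_kk cinner_zero2 kk_0)

lemma mult_x0: "\<phi> \<in> mult BB H \<Longrightarrow> (\<lambda>z. \<phi> z * kf 0 z) = \<phi>"
proof
  fix z assume "\<phi> \<in> mult BB H"
  then show "\<phi> z * kf 0 z = \<phi> z"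
    by (cases "z \<in> BB") (auto simp: x0_val mult_def)
qed

lemma mult_H: "\<phi> \<in> mult BB H \<Longrightarrow> \<phi> \<in> H"
proof -
  assume m: "\<phi> \<in> mult BB H"
  then have "(\<lambda>z. \<phi> z * kf 0 z) \<in> H" using x0_in by (auto simp: mult_def)
  then show ?thesis using mult_x0[OF m] by simp
qed

lemma mult_add: "\<phi> \<in> mult BB H \<Longrightarrow> \<psi> \<in> mult BB H \<Longrightarrow> (\<lambda>z. \<phi> z + \<psi> z) \<in> mult BB H"
proof -
  assume a: "\<phi> \<in> mult BB H" "\<psi> \<in> mult BB H"
  have "(\<lambda>z. (\<phi> z + \<psi> z) * f z) \<in> H" if f: "f \<in> H" for f
  proof -
    have "(\<lambda>z. \<phi> z * f z + \<psi> z * f z) \<in> H" using a f by (intro add_in) (auto simp: mult_def)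
    then show ?thesis by (simp add: distrib_right)
  qed
  then show ?thesis using a by (auto simp: mult_def)
qed

lemma mult_smult: "\<phi> \<in> mult BB H \<Longrightarrow> (\<lambda>z. c * \<phi> z) \<in> mult BB H"
proof -
  assume a: "\<phi> \<in> mult BB H"
  have "(\<lambda>z. c * \<phi> z * f z) \<in> H" if f: "f \<in> H" for f
  proof -
    have "(\<lambda>z. c * (\<phi> z * f z)) \<in> H" using a f by (intro smult_in) (auto simp: mult_def)
    then show ?thesis by (simp add: mult.assoc)
  qed
  then show ?thesis using a by (auto simp: mult_def)
qed

lemma hnorm_x0: "hnorm ip (kf 0) = 1"
  unfolding hnorm_def using repro[OF _ x0_in, of 0] x0_val[of 0] by simp

lemma tcp: "tc_pair H ip (\<lambda>_. kf 0) Dl"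
  unfolding tc_pair_def using x0_in Dl_in Dl_summable by (simp add: hnorm_x0)

lemma tc_eq: "\<phi> \<in> mult BB H \<Longrightarrow> tc_functional ip (\<lambda>_. kf 0) Dl \<phi> = (\<Sum>k. ip \<phi> (Dl k))"
  unfolding tc_functional_def by (simp add: mult_x0)

definition Phi :: "(complex^'n \<Rightarrow> complex) \<Rightarrow> complex" where
  "Phi \<phi> = (if \<phi> \<in> mult BB H then tc_functional ip (\<lambda>_. kf 0) Dl \<phi>
     else if (\<exists>q. is_poly q \<and> \<phi> = restrict0 BB q)
       then (LINT z|\<mu>. (SOME q. is_poly q \<and> \<phi> = restrict0 BB q) z * 1) else 0)"

lemma topspace_ws: "topspace (weak_star_top BB H ip) = mult BB H"
proof -
  have "topspace (weak_star_top BB H ip) = \<Union>{{\<phi> \<in> mult BB H. tc_functional ip xs ys \<phi> \<in> U} | xs ys U. tc_pair H ip xs ys \<and> open U}"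
    unfolding weak_star_top_def by (rule topology_generated_by_topspace)
  also have "\<dots> = mult BB H"
  proof
    show "\<Union>{{\<phi> \<in> mult BB H. tc_functional ip xs ys \<phi> \<in> U} | xs ys U. tc_pair H ip xs ys \<and> open U} \<subseteq> mult BB H"
      by auto
    show "mult BB H \<subseteq> \<Union>{{\<phi> \<in> mult BB H. tc_functional ip xs ys \<phi> \<in> U} | xs ys U. tc_pair H ip xs ys \<and> open U}"
      using tcp by blast
  qed
  finally show ?thesis .
qed

lemma Phi_cont: "continuous_map (weak_star_top BB H ip) euclidean Phi"
  unfolding continuous_map
proof (intro conjI allI impI)
  show "Phi ` topspace (weak_star_top BB H ip) \<subseteq> topspace euclidean" by simp
  fix U :: "complex set" assume "openin euclidean U"
  then have U: "open U" by simp
  have "{x \<in> topspace (weak_star_top BB H ip). Phi x \<in> U} = {\<phi> \<in> mult BB H. tc_functional ip (\<lambda>_. kf 0) Dl \<phi> \<in> U}"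
    unfolding topspace_ws Phi_def by auto
  also have "openin (weak_star_top BB H ip) \<dots>"
    unfolding weak_star_top_def using tcp U by (intro topology_generated_by_Basis) blast
  finally show "openin (weak_star_top BB H ip) {x \<in> topspace (weak_star_top BB H ip). Phi x \<in> U}" .
qed

lemma Phi_add: "\<phi> \<in> mult BB H \<Longrightarrow> \<psi> \<in> mult BB H \<Longrightarrow> Phi (\<lambda>z. \<phi> z + \<psi> z) = Phi \<phi> + Phi \<psi>"
proof -
  assume a: "\<phi> \<in> mult BB H" "\<psi> \<in> mult BB H"
  have h: "\<phi> \<in> H" "\<psi> \<in> H" using mult_H a by auto
  have "Phi (\<lambda>z. \<phi> z + \<psi> z) = (\<Sum>k. ip (\<lambda>z. \<phi> z + \<psi> z) (Dl k))"
    using mult_add[OF a] by (simp add: Phi_def tc_eq)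
  also have "\<dots> = (\<Sum>k. ip \<phi> (Dl k) + ip \<psi> (Dl k))" using h Dl_in by (simp add: ip_add1)
  also have "\<dots> = (\<Sum>k. ip \<phi> (Dl k)) + (\<Sum>k. ip \<psi> (Dl k))"
    using h by (intro suminf_add[symmetric] ipDl_summable)
  also have "\<dots> = Phi \<phi> + Phi \<psi>" using a by (simp add: Phi_def tc_eq)
  finally show ?thesis .
qed

lemma Phi_smult: "\<phi> \<in> mult BB H \<Longrightarrow> Phi (\<lambda>z. c * \<phi> z) = c * Phi \<phi>"
proof -
  assume a: "\<phi> \<in> mult BB H"
  have h: "\<phi> \<in> H" using mult_H a by auto
  have "Phi (\<lambda>z. c * \<phi> z) = (\<Sum>k. ip (\<lambda>z. c * \<phi> z) (Dl k))"
    using mult_smult[OF a] by (simp add: Phi_def tc_eq)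
  also have "\<dots> = (\<Sum>k. c * ip \<phi> (Dl k))" using h Dl_in by (simp add: ip_smult1)
  also have "\<dots> = c * (\<Sum>k. ip \<phi> (Dl k))"
    using h by (intro suminf_mult ipDl_summable)
  also have "\<dots> = c * Phi \<phi>" using a by (simp add: Phi_def tc_eq)
  finally show ?thesis .
qed

lemma poly_eq_cball: "is_poly p \<Longrightarrow> is_poly q \<Longrightarrow> restrict0 BB p = restrict0 BB q \<Longrightarrow> z \<in> cball 0 1 \<Longrightarrow> p z = q z"
proof -
  assume p: "is_poly p" and q: "is_poly q" and e: "restrict0 BB p = restrict0 BB q" and z: "z \<in> cball 0 1"
  have cl: "closed {z. p z = q z}"
    using poly_cont[OF p] poly_cont[OF q] by (intro closed_Collect_eq) auto
  have "BB \<subseteq> {z. p z = q z}"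
  proof
    fix u assume "u \<in> BB"
    then show "u \<in> {z. p z = q z}" using fun_cong[OF e, of u] by (simp add: restrict0_def)
  qed
  then have "closure BB \<subseteq> {z. p z = q z}" using cl by (rule closure_minimal)
  then show ?thesis using z by auto
qed

lemma Phi_poly: "is_poly p \<Longrightarrow> Phi (restrict0 BB p) = (LINT z|\<mu>. p z * 1)"
proof -
  assume p: "is_poly p"
  show ?thesis
  proof (cases "restrict0 BB p \<in> mult BB H")
    case True
    have h: "restrict0 BB p \<in> H" using mult_H[OF True] .
    have "(\<lambda>k. ip (restrict0 BB p) (Dl k)) sums (LINT x|\<mu>. p x)"
      by (rule ipDl_sums[OF h poly_lim_Y[OF p h]])
    then have "(\<Sum>k. ip (restrict0 BB p) (Dl k)) = (LINT x|\<mu>. p x)" by (rule sums_unique[symmetric])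
    then show ?thesis using True by (simp add: Phi_def tc_eq)
  next
    case False
    define q where "q = (SOME q. is_poly q \<and> restrict0 BB p = restrict0 BB q)"
    have "\<exists>q. is_poly q \<and> restrict0 BB p = restrict0 BB q" using p by blast
    then have q: "is_poly q \<and> restrict0 BB p = restrict0 BB q" unfolding q_def by (rule someI_ex)
    have Pq: "Phi (restrict0 BB p) = (LINT z|\<mu>. q z * 1)"
      using False p unfolding Phi_def q_def by auto
    have "(LINT z|\<mu>. q z * 1) = (LINT z|\<mu>. p z * 1)"
    proof (rule integral_cong_AE)
      show "(\<lambda>z. q z * 1) \<in> borel_measurable \<mu>" unfolding meas_mu
        using poly_cont q by (auto intro: borel_measurable_continuous_onI)
      show "(\<lambda>z. p z * 1) \<in> borel_measurable \<mu>" unfolding meas_mu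
        using poly_cont p by (auto intro: borel_measurable_continuous_onI)
      show "AE z in \<mu>. q z * 1 = p z * 1"
        using AE_E
      proof eventually_elim
        fix z assume "z \<in> E"
        then have "z \<in> cball 0 1" using Esph by auto
        then show "q z * 1 = p z * 1" using poly_eq_cball[OF p _ _ , of q z] q by simp
      qed
    qed
    then show ?thesis using Pq by simp
  qed
qed

lemma henkin_mu: "henkin H ip \<mu> (\<lambda>_. 1)"
  unfolding henkin_def
  using Phi_add Phi_smult Phi_cont Phi_poly by blast

lemma sphere_mu: "sphere_cmeasure \<mu> (\<lambda>_. 1)"
  unfolding sphere_cmeasure_def
proof (intro conjI)
  show "sets \<mu> = sets borel" by (rule mu_sets)
  show "finite_measure \<mu>" by (rule mu_fin)
  have "emeasure \<mu> (UNIV - sphere 0 1) \<le> emeasure \<mu> (UNIV - E)"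
    using Esph E_borel mu_sets by (intro emeasure_mono) auto
  then show "emeasure \<mu> (UNIV - sphere 0 1) = 0" using mu_E by simp
  show "integrable \<mu> (\<lambda>_. 1::complex)" by simp
qed

lemma mu_E0: "totally_null H ip E \<Longrightarrow> emeasure \<mu> E = 0"
proof -
  assume "totally_null H ip E"
  then have "(\<integral>\<^sup>+ z\<in>E. ennreal (cmod ((\<lambda>_. 1::complex) z)) \<partial>\<mu>) = 0"
    using sphere_mu henkin_mu unfolding totally_null_def by blast
  then have "(\<integral>\<^sup>+ z. indicator E z \<partial>\<mu>) = 0" by simp
  then show ?thesis using E_borel mu_sets by simp
qed

end

theorem proposition3p3:
  fixes a :: real
    and E :: "(complex^'n) set"
    and H :: "(complex^'n \<Rightarrow> complex) set"
    and ip :: "(complex^'n \<Rightarrow> complex) \<Rightarrow> (complex^'n \<Rightarrow> complex) \<Rightarrow> complex"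
  assumes "0 \<le> a" and "a < 1"
    and "compact E" and "E \<subseteq> sphere 0 1"
    and "rkhs_on (ball 0 1) (kernelD a) H ip"
    and "totally_null H ip E"
  shows "capacity a E = 0"
proof -
  have z: "emeasure \<mu> E = 0" if mu: "\<mu> \<in> {\<mu>. sets \<mu> = sets borel \<and> finite_measure \<mu> \<and>
        emeasure \<mu> (UNIV - E) = 0 \<and> energy a \<mu> \<le> 1}" for \<mu>
  proof (cases "E = {}")
    case True then show ?thesis by simp
  next
    case False
    interpret core a E H ip \<mu>
      using assms mu False by (intro core.intro) auto
    show ?thesis using mu_E0 assms(6) .
  qed
  have "cap_sqrt a E \<le> 0"
    unfolding cap_sqrt_def by (rule SUP_least) (use z in simp)
  then have "cap_sqrt a E = 0" by simp
  then show ?thesis unfolding capacity_def by simp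
qed



end
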